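(* Let $p\ge2$, $B_n\ge1$, $\mathbf X_1,\dots,\mathbf X_n$ iid in $\mathbb R^p$ with law $F$, and $h:\mathbb R^p\times\mathbb R^p\to\mathbb R^{p\times p}$ a measurable symmetric kernel with symmetric-matrix values such that for all $m,k$, $\max_{\ell=0,1,2}\mathbb E(|h_{mk}|^{2+\ell}/B_n^\ell)\vee\mathbb E[\exp(|h_{mk}|/B_n)]\le2$. Let $$\varpi_1(n,p)=\Big(\frac{\log p}{n}\Big)^{1/2}B_n+\frac{(\log p)(\log(np))^2}{n}B_n^2,\qquad\Delta_1=\frac1n\Big\|\sum_{i=1}^n\tilde{\mathbf g}_i\tilde{\mathbf g}_i^\top-\Gamma_g\Big\|,$$ where $\tilde{\mathbf g}_i=\mathrm{vech}(g(\mathbf X_i))$. Then $\mathbb E(\Delta_1)\le K\varpi_1(n,p)$ for some absolute constant $K>0$.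
   Context: $\|A\|=\max_{a,b}|A_{ab}|$ (entrywise max norm, for matrices of any size). $\mathbf X,\mathbf X'$ independent with law $F$; $h_{mk}=h_{mk}(\mathbf X,\mathbf X')$; $g(\mathbf x)=\mathbb Eh(\mathbf x,\mathbf X')-\mathbb Eh(\mathbf X,\mathbf X')$. $\mathrm{vech}(g)$ is the vector $(g_{jk})_{j\ge k}$ of length $p(p+1)/2$, and $\Gamma_g=\mathrm{Cov}(\mathrm{vech}(g(\mathbf X)))$. *)

theory Defs
  imports "HOL-Probability.Probability"
begin

text \<open>Points of R^p are functions nat => real (coordinates 0..p-1), with the
  Borel product sigma algebra PiM {..<p} (%_. borel). A matrix-valued kernel
  is h :: point => point => nat => nat => real, entry (m,k) being h x y m k.\<close>

type_synonym pt = "nat \<Rightarrow> real"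
type_synonym kern = "pt \<Rightarrow> pt \<Rightarrow> nat \<Rightarrow> nat \<Rightarrow> real"

definition vech_idx :: "nat \<Rightarrow> (nat \<times> nat) set" where
  "vech_idx p = {(j, k). k \<le> j \<and> j < p}"

definition gfun :: "pt measure \<Rightarrow> kern \<Rightarrow> pt \<Rightarrow> nat \<times> nat \<Rightarrow> real" where
  "gfun F h x jk =
     (\<integral>y. h x y (fst jk) (snd jk) \<partial>F)
     - (\<integral>z. h (fst z) (snd z) (fst jk) (snd jk) \<partial>(F \<Otimes>\<^sub>M F))"

definition Gamma_g :: "pt measure \<Rightarrow> kern \<Rightarrow> nat \<times> nat \<Rightarrow> nat \<times> nat \<Rightarrow> real" where
  "Gamma_g F h a b =
     (\<integral>x. gfun F h x a * gfun F h x b \<partial>F)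
     - (\<integral>x. gfun F h x a \<partial>F) * (\<integral>x. gfun F h x b \<partial>F)"

text \<open>Delta_1 = || (1/n) sum_i g_i g_i^T - Gamma_g ||_max, evaluated at a sample
  omega = (X_0,...,X_{n-1}).\<close>
definition Delta1 :: "nat \<Rightarrow> pt measure \<Rightarrow> kern \<Rightarrow> nat \<Rightarrow> (nat \<Rightarrow> pt) \<Rightarrow> real" where
  "Delta1 p F h n \<omega> =
     Max {\<bar>(1 / real n) * (\<Sum>i<n. gfun F h (\<omega> i) a * gfun F h (\<omega> i) b) - Gamma_g F h a b\<bar>
          | a b. a \<in> vech_idx p \<and> b \<in> vech_idx p}"

definition varpi1 :: "nat \<Rightarrow> nat \<Rightarrow> real \<Rightarrow> real" where
  "varpi1 n p B = sqrt (ln (real p) / real n) * B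
                 + ln (real p) * (ln (real n * real p))\<^sup>2 / real n * B\<^sup>2"

end

theory Submission
  imports Defs
begin

lemma exp_tangent: "exp (v::real) * (1 + (u - v)) \<le> exp u"
proof -
  have "1 + (u - v) \<le> exp (u - v)" by simp
  hence "exp v * (1 + (u - v)) \<le> exp v * exp (u - v)" by (intro mult_left_mono) auto
  thus ?thesis by (simp add: exp_diff)
qed

lemma pow4_tangent: "(m::real)^4 + 4*m^3*(y - m) \<le> y^4"
proof -
  have "0 \<le> (y-m)^2*((y+m)^2+2*m^2)" by simp
  thus ?thesis by (simp add: algebra_simps power2_eq_square power3_eq_cube power4_eq_xxxx)
qed

lemma jensen_nn:
  fixes M :: "'a measure" and f :: "'a \<Rightarrow> real" and \<phi> :: "real \<Rightarrow> real"
  assumes P: "prob_space M"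
    and fm: "f \<in> borel_measurable M"
    and \<phi>m: "(\<lambda>x. \<phi> \<bar>f x\<bar>) \<in> borel_measurable M"
    and mono: "\<And>x y. 0 \<le> x \<Longrightarrow> x \<le> y \<Longrightarrow> \<phi> x \<le> \<phi> y"
    and nn: "\<And>x. 0 \<le> x \<Longrightarrow> 0 \<le> \<phi> x"
    and tang: "\<And>m. 0 \<le> m \<Longrightarrow> \<exists>c. \<forall>y\<ge>0. \<phi> m + c * (y - m) \<le> \<phi> y"
  shows "ennreal (\<phi> \<bar>integral\<^sup>L M f\<bar>) \<le> (\<integral>\<^sup>+x. ennreal (\<phi> \<bar>f x\<bar>) \<partial>M)"
proof (cases "integrable M f")
  case False
  interpret prob_space M by (rule P)
  have "ennreal (\<phi> \<bar>integral\<^sup>L M f\<bar>) = (\<integral>\<^sup>+x. ennreal (\<phi> 0) \<partial>M)"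
    using False by (simp add: not_integrable_integral_eq emeasure_space_1)
  also have "\<dots> \<le> (\<integral>\<^sup>+x. ennreal (\<phi> \<bar>f x\<bar>) \<partial>M)"
    by (intro nn_integral_mono ennreal_leI mono) auto
  finally show ?thesis .
next
  case True
  interpret prob_space M by (rule P)
  define m where "m = integral\<^sup>L M (\<lambda>x. \<bar>f x\<bar>)"
  have m0: "0 \<le> m" unfolding m_def by simp
  have le1: "\<phi> \<bar>integral\<^sup>L M f\<bar> \<le> \<phi> m"
    unfolding m_def by (intro mono) (auto intro: integral_abs_bound)
  show ?thesis
  proof (cases "(\<integral>\<^sup>+x. ennreal (\<phi> \<bar>f x\<bar>) \<partial>M) = \<infinity>")
    case True thus ?thesis by simp
  next
    case False
    have int\<phi>: "integrable M (\<lambda>x. \<phi> \<bar>f x\<bar>)"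
      using False \<phi>m nn by (intro integrableI_nonneg) (auto simp: top.not_eq_extremum)
    obtain c where c: "\<And>y. 0 \<le> y \<Longrightarrow> \<phi> m + c * (y - m) \<le> \<phi> y" using tang[OF m0] by blast
    have intabs: "integrable M (\<lambda>x. \<bar>f x\<bar>)" using True by auto
    have "\<phi> m = integral\<^sup>L M (\<lambda>x. \<phi> m + c * (\<bar>f x\<bar> - m))"
      using intabs by (simp add: m_def prob_space)
    also have "\<dots> \<le> integral\<^sup>L M (\<lambda>x. \<phi> \<bar>f x\<bar>)"
      using intabs int\<phi> c by (intro integral_mono) auto
    finally have "\<phi> \<bar>integral\<^sup>L M f\<bar> \<le> integral\<^sup>L M (\<lambda>x. \<phi> \<bar>f x\<bar>)" using le1 by linarith
    hence "ennreal (\<phi> \<bar>integral\<^sup>L M f\<bar>) \<le> ennreal (integral\<^sup>L M (\<lambda>x. \<phi> \<bar>f x\<bar>))"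
      by (rule ennreal_leI)
    also have "\<dots> = (\<integral>\<^sup>+x. ennreal (\<phi> \<bar>f x\<bar>) \<partial>M)"
      using int\<phi> nn by (subst nn_integral_eq_integral) auto
    finally show ?thesis .
  qed
qed

lemma exp_le_quad: assumes "\<bar>x::real\<bar> \<le> 1" shows "exp x \<le> 1 + x + x^2"
proof (cases "x \<ge> 0")
  case True thus ?thesis using assms exp_bound[of x] by auto
next
  case False
  define y where "y = -x"
  have y: "0 \<le> y" "y \<le> 1" using False assms by (auto simp: y_def)
  have "1 + y \<le> exp y" by simp
  hence "exp x \<le> 1 / (1 + y)"
  proof -
    assume a: "1 + y \<le> exp y"
    have "exp x = inverse (exp y)" by (simp add: y_def exp_minus)
    also have "\<dots> \<le> inverse (1 + y)" using a y by (intro le_imp_inverse_le) auto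
    finally show ?thesis by (simp add: inverse_eq_divide)
  qed
  also have "\<dots> \<le> 1 - y + y^2"
  proof -
    have "1 \<le> (1 - y + y^2) * (1 + y)" using y by (simp add: algebra_simps power2_eq_square power3_eq_cube)
    thus ?thesis using y by (simp add: divide_le_eq)
  qed
  finally show ?thesis by (simp add: y_def)
qed

lemma mgf_bounded:
  fixes M :: "'a measure" and Y :: "'a \<Rightarrow> real"
  assumes P: "prob_space M" and Ym: "Y \<in> borel_measurable M"
    and bnd: "\<And>x. x \<in> space M \<Longrightarrow> \<bar>Y x\<bar> \<le> c"
    and mean: "integral\<^sup>L M Y = 0" and var: "integral\<^sup>L M (\<lambda>x. (Y x)^2) \<le> s2"
    and t: "\<bar>t\<bar> * c \<le> 1"
  shows "(\<integral>\<^sup>+x. ennreal (exp (t * Y x)) \<partial>M) \<le> ennreal (exp (t^2 * s2))"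
proof -
  interpret prob_space M by (rule P)
  have intY: "integrable M Y" using bnd Ym by (intro integrable_const_bound[where B=c]) auto
  have intY2: "integrable M (\<lambda>x. (Y x)^2)" using bnd Ym
  proof -
    have "\<bar>(Y x)^2\<bar> \<le> c^2" if "x \<in> space M" for x
    proof -
      have "\<bar>Y x\<bar>^2 \<le> c^2" using bnd[OF that] by (intro power_mono) auto
      thus ?thesis by simp
    qed
    thus ?thesis using Ym by (intro integrable_const_bound[where B="c^2"]) auto
  qed
  have pt: "exp (t * Y x) \<le> 1 + t * Y x + t^2 * (Y x)^2" if "x \<in> space M" for x
  proof -
    have "\<bar>t * Y x\<bar> \<le> \<bar>t\<bar> * c" using bnd[OF that] by (simp add: abs_mult mult_left_mono)
    hence "\<bar>t * Y x\<bar> \<le> 1" using t by linarith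
    from exp_le_quad[OF this] show ?thesis by (simp add: power_mult_distrib)
  qed
  have "(\<integral>\<^sup>+x. ennreal (exp (t * Y x)) \<partial>M) \<le> (\<integral>\<^sup>+x. ennreal (1 + t * Y x + t^2 * (Y x)^2) \<partial>M)"
    using pt by (intro nn_integral_mono ennreal_leI) auto
  also have "\<dots> = ennreal (integral\<^sup>L M (\<lambda>x. 1 + t * Y x + t^2 * (Y x)^2))"
  proof (rule nn_integral_eq_integral)
    show "integrable M (\<lambda>x. 1 + t * Y x + t^2 * (Y x)^2)" using intY intY2 by auto
    have "0 \<le> 1 + z + z^2" for z :: real
    proof -
      have "0 \<le> (z + 1/2)^2 + 3/4" by simp
      thus ?thesis by (simp add: power2_eq_square algebra_simps)
    qed
    thus "AE x in M. 0 \<le> 1 + t * Y x + t^2 * (Y x)^2" by (simp add: power_mult_distrib[symmetric])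
  qed
  also have "\<dots> \<le> ennreal (exp (t^2 * s2))"
  proof (rule ennreal_leI)
    have "integral\<^sup>L M (\<lambda>x. 1 + t * Y x + t^2 * (Y x)^2)
        = integral\<^sup>L M (\<lambda>x. 1 + t * Y x) + integral\<^sup>L M (\<lambda>x. t^2 * (Y x)^2)"
      using intY intY2 by (intro Bochner_Integration.integral_add) auto
    also have "integral\<^sup>L M (\<lambda>x. 1 + t * Y x) = integral\<^sup>L M (\<lambda>x. 1) + integral\<^sup>L M (\<lambda>x. t * Y x)"
      using intY by (intro Bochner_Integration.integral_add) auto
    also have "integral\<^sup>L M (\<lambda>x. t * Y x) = 0" using mean by simp
    also have "integral\<^sup>L M (\<lambda>x. t^2 * (Y x)^2) = t^2 * integral\<^sup>L M (\<lambda>x. (Y x)^2)" by simp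
    also have "t^2 * integral\<^sup>L M (\<lambda>x. (Y x)^2) \<le> t^2 * s2" using var by (intro mult_left_mono) auto
    finally have "integral\<^sup>L M (\<lambda>x. 1 + t * Y x + t^2 * (Y x)^2) \<le> 1 + t^2 * s2" by (simp add: prob_space)
    also have "\<dots> \<le> exp (t^2 * s2)" by simp
    finally show "integral\<^sup>L M (\<lambda>x. 1 + t * Y x + t^2 * (Y x)^2) \<le> exp (t^2 * s2)" .
  qed
  finally show ?thesis .
qed

lemma mgf_prod:
  fixes F :: "'a measure" and Y :: "'a \<Rightarrow> real"
  assumes P: "prob_space F" and Ym: "Y \<in> borel_measurable F"
  shows "(\<integral>\<^sup>+\<omega>. ennreal (exp (t * (\<Sum>i<n. Y (\<omega> i)))) \<partial>PiM {..<n} (\<lambda>_. F))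
         = (\<integral>\<^sup>+x. ennreal (exp (t * Y x)) \<partial>F) ^ n"
proof -
  interpret prob_space F by (rule P)
  interpret PS: product_sigma_finite "\<lambda>_. F"
    by (simp add: product_sigma_finite_def sigma_finite_measure_axioms)
  have "(\<integral>\<^sup>+\<omega>. ennreal (exp (t * (\<Sum>i<n. Y (\<omega> i)))) \<partial>PiM {..<n} (\<lambda>_. F))
      = (\<integral>\<^sup>+\<omega>. (\<Prod>i\<in>{..<n}. (\<lambda>i x. ennreal (exp (t * Y x))) i (\<omega> i)) \<partial>PiM {..<n} (\<lambda>_. F))"
    by (intro nn_integral_cong) (simp add: sum_distrib_left exp_sum prod_ennreal)
  also have "\<dots> = (\<Prod>i\<in>{..<n}. integral\<^sup>N F (\<lambda>x. ennreal (exp (t * Y x))))"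
    using Ym by (intro PS.product_nn_integral_prod) auto
  finally show ?thesis by simp
qed

lemma marginal_nn:
  fixes F :: "'a measure" and f :: "'a \<Rightarrow> ennreal"
  assumes P: "prob_space F" and fm: "f \<in> borel_measurable F" and i: "i < n"
  shows "(\<integral>\<^sup>+\<omega>. f (\<omega> i) \<partial>PiM {..<n} (\<lambda>_. F)) = integral\<^sup>N F f"
proof -
  have "distr (PiM {..<n} (\<lambda>_. F)) F (\<lambda>\<omega>. \<omega> i) = F"
    using P i by (intro distr_PiM_component) auto
  hence "integral\<^sup>N F f = integral\<^sup>N (distr (PiM {..<n} (\<lambda>_. F)) F (\<lambda>\<omega>. \<omega> i)) f" by simp
  also have "\<dots> = (\<integral>\<^sup>+\<omega>. f (\<omega> i) \<partial>PiM {..<n} (\<lambda>_. F))"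
    using fm i by (intro nn_integral_distr) auto
  finally show ?thesis by simp
qed

definition clip :: "real \<Rightarrow> real \<Rightarrow> real" where "clip M z = max (-M) (min M z)"

lemma clip_bound: "0 \<le> M \<Longrightarrow> \<bar>clip M z\<bar> \<le> M" by (simp add: clip_def)
lemma clip_abs: "0 \<le> M \<Longrightarrow> \<bar>clip M z\<bar> \<le> \<bar>z\<bar>" by (simp add: clip_def)
lemma clip_small: "\<bar>z\<bar> \<le> M \<Longrightarrow> clip M z = z" by (simp add: clip_def)
lemma clip_meas[measurable]: "clip M \<in> borel_measurable borel" unfolding clip_def by measurable

lemma comp_meas:
  fixes f :: "'a \<Rightarrow> 'b::topological_space"
  assumes "f \<in> borel_measurable F" "i < n"
  shows "(\<lambda>\<omega>. f (\<omega> i)) \<in> borel_measurable (PiM {..<n} (\<lambda>_. F))"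
  using assms by (intro measurable_compose[OF measurable_component_singleton]) auto

lemma square_int:
  fixes F :: "'a measure" and f :: "'a \<Rightarrow> real"
  assumes P: "prob_space F" and fm: "f \<in> borel_measurable F"
    and sq: "(\<integral>\<^sup>+x. ennreal ((f x)^2) \<partial>F) \<le> ennreal s2"
  shows "integrable F f"
proof -
  interpret prob_space F by (rule P)
  have "(\<integral>\<^sup>+x. ennreal (norm (f x)) \<partial>F) \<le> (\<integral>\<^sup>+x. ennreal 1 + ennreal ((f x)^2) \<partial>F)"
  proof (intro nn_integral_mono)
    fix x
    have "\<bar>f x\<bar> \<le> 1 + (f x)^2"
    proof (cases "\<bar>f x\<bar> \<le> 1")
      case True thus ?thesis by (smt (verit) zero_le_power2)
    next
      case False
      hence "\<bar>f x\<bar> \<le> \<bar>f x\<bar> * \<bar>f x\<bar>" by (intro mult_le_cancel_left1[THEN iffD2]) auto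
      thus ?thesis by (simp add: power2_eq_square abs_mult[symmetric])
    qed
    hence "ennreal (norm (f x)) \<le> ennreal (1 + (f x)^2)" by (intro ennreal_leI) simp
    also have "\<dots> = ennreal 1 + ennreal ((f x)^2)" by (intro ennreal_plus) auto
    finally show "ennreal (norm (f x)) \<le> ennreal 1 + ennreal ((f x)^2)" .
  qed
  also have "\<dots> = 1 + (\<integral>\<^sup>+x. ennreal ((f x)^2) \<partial>F)"
    using fm by (subst nn_integral_add) (auto simp: emeasure_space_1)
  also have "\<dots> < \<infinity>" using sq by (simp add: le_less_trans[OF _ ennreal_less_top])
  finally show ?thesis using fm by (intro integrableI_bounded) auto
qed

lemma conc:
  fixes F :: "'a measure" and V :: "'b set" and Z :: "'b \<Rightarrow> 'a \<Rightarrow> real"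
  assumes P: "prob_space F" and fin: "finite V" and ne: "V \<noteq> {}" and n: "1 \<le> n"
    and M: "0 < M" and s2: "0 < s2" and eps: "0 \<le> \<epsilon>"
    and Zm: "\<And>v. v \<in> V \<Longrightarrow> Z v \<in> borel_measurable F"
    and sq: "\<And>v. v \<in> V \<Longrightarrow> (\<integral>\<^sup>+x. ennreal ((Z v x)^2) \<partial>F) \<le> ennreal s2"
    and tl: "\<And>v. v \<in> V \<Longrightarrow> (\<integral>\<^sup>+x. ennreal \<bar>Z v x - clip M (Z v x)\<bar> \<partial>F) \<le> ennreal \<epsilon>"
  shows "(\<integral>\<^sup>+\<omega>. ennreal (Max ((\<lambda>v. \<bar>(1 / real n) * (\<Sum>i<n. Z v (\<omega> i)) - integral\<^sup>L F (Z v)\<bar>) ` V)) \<partial>PiM {..<n} (\<lambda>_. F))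
      \<le> ennreal (2 * sqrt (s2 * ln (3 * real (card V)) / real n) + 2 * M * ln (3 * real (card V)) / real n
                 + 2 * real (card V) * \<epsilon>)"
proof -
  interpret prob_space F by (rule P)
  define Pn where "Pn = PiM {..<n} (\<lambda>_. F)"
  interpret Pn: prob_space Pn unfolding Pn_def using P by (intro prob_space_PiM) auto
  define N where "N = real (card V)"
  have N1: "1 \<le> N" using fin ne by (simp add: N_def Suc_le_eq card_gt_0_iff)
  define L where "L = ln (3 * N)"
  have L1: "1 \<le> L"
  proof -
    have "exp 1 \<le> 3 * N" using exp_le N1 by linarith
    hence "ln (exp 1) \<le> ln (3 * N)" using N1 by (subst ln_le_cancel_iff) auto
    thus ?thesis by (simp add: L_def)
  qed
  have n0: "0 < real n" using n by simp
  define T where "T v x = clip M (Z v x)" for v x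
  define R where "R v x = Z v x - T v x" for v x
  define mT where "mT v = integral\<^sup>L F (T v)" for v
  define Y where "Y v x = T v x - mT v" for v x
  have Tm: "T v \<in> borel_measurable F" if "v \<in> V" for v
    unfolding T_def using Zm[OF that] by measurable
  have Tb: "\<bar>T v x\<bar> \<le> M" for v x unfolding T_def using M clip_bound by auto
  have intT: "integrable F (T v)" if "v \<in> V" for v
    using Tm[OF that] Tb by (intro integrable_const_bound[where B=M]) auto
  have intZ: "integrable F (Z v)" if "v \<in> V" for v
    using square_int[OF P Zm[OF that] sq[OF that]] .
  have Rm: "R v \<in> borel_measurable F" if "v \<in> V" for v
    unfolding R_def using Zm[OF that] Tm[OF that] by measurable
  have intR: "integrable F (R v)" if "v \<in> V" for v
    unfolding R_def using intZ[OF that] intT[OF that] by auto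
  have ER: "\<bar>integral\<^sup>L F (R v)\<bar> \<le> \<epsilon>" if "v \<in> V" for v
  proof -
    have "ennreal (norm (integral\<^sup>L F (R v))) \<le> (\<integral>\<^sup>+x. ennreal (norm (R v x)) \<partial>F)"
      using intR[OF that] by (rule integral_norm_bound_ennreal)
    also have "\<dots> \<le> ennreal \<epsilon>" using tl[OF that] by (simp add: R_def T_def)
    finally show ?thesis using eps by (simp add: ennreal_le_iff)
  qed
  have EZ: "integral\<^sup>L F (Z v) = mT v + integral\<^sup>L F (R v)" if "v \<in> V" for v
  proof -
    have "integral\<^sup>L F (Z v) = integral\<^sup>L F (\<lambda>x. T v x + R v x)" by (simp add: R_def)
    also have "\<dots> = mT v + integral\<^sup>L F (R v)"
      unfolding mT_def using intT[OF that] intR[OF that] by (rule Bochner_Integration.integral_add)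
    finally show ?thesis .
  qed
  have mTb: "\<bar>mT v\<bar> \<le> M" if "v \<in> V" for v
  proof -
    have "integral\<^sup>L F (T v) \<le> integral\<^sup>L F (\<lambda>_. M)"
      using intT[OF that] Tb by (intro integral_mono) (auto simp: abs_le_iff)
    moreover have "integral\<^sup>L F (\<lambda>_. -M) \<le> integral\<^sup>L F (T v)"
    proof -
      have "-M \<le> T v x" for x using Tb[of v x] by linarith
      thus ?thesis using intT[OF that] by (intro integral_mono) auto
    qed
    ultimately show ?thesis by (simp add: mT_def prob_space abs_le_iff)
  qed
  have Ym: "Y v \<in> borel_measurable F" if "v \<in> V" for v
    unfolding Y_def using Tm[OF that] by measurable
  have Yb: "\<bar>Y v x\<bar> \<le> 2 * M" if "v \<in> V" for v x
    unfolding Y_def using Tb[of v x] mTb[OF that] by linarith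
  have Ymean: "integral\<^sup>L F (Y v) = 0" if "v \<in> V" for v
    unfolding Y_def using intT[OF that] by (simp add: mT_def prob_space)
  have Yvar: "integral\<^sup>L F (\<lambda>x. (Y v x)^2) \<le> s2" if v: "v \<in> V" for v
  proof -
    have intT2: "integrable F (\<lambda>x. (T v x)^2)"
    proof -
      have "\<bar>(T v x)^2\<bar> \<le> M^2" for x
      proof -
        have "\<bar>T v x\<bar>^2 \<le> M^2" using Tb[of v x] by (intro power_mono) auto
        thus ?thesis by simp
      qed
      thus ?thesis using Tm[OF v] by (intro integrable_const_bound[where B="M^2"]) auto
    qed
    have "integral\<^sup>L F (\<lambda>x. (Y v x)^2)
        = integral\<^sup>L F (\<lambda>x. (T v x)^2 + (- 2 * mT v) * T v x + (mT v)^2)"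
      by (intro Bochner_Integration.integral_cong) (auto simp: Y_def power2_eq_square algebra_simps)
    also have "\<dots> = integral\<^sup>L F (\<lambda>x. (T v x)^2) + (- 2 * mT v) * mT v + (mT v)^2"
      using intT2 intT[OF v] by (simp add: mT_def prob_space)
    also have "\<dots> \<le> integral\<^sup>L F (\<lambda>x. (T v x)^2)" by (simp add: power2_eq_square)
    also have "\<dots> \<le> s2"
    proof -
      have "ennreal (integral\<^sup>L F (\<lambda>x. (T v x)^2)) = (\<integral>\<^sup>+x. ennreal ((T v x)^2) \<partial>F)"
        using intT2 by (subst nn_integral_eq_integral) auto
      also have "\<dots> \<le> (\<integral>\<^sup>+x. ennreal ((Z v x)^2) \<partial>F)"
      proof (intro nn_integral_mono ennreal_leI)
        fix x
        have "\<bar>T v x\<bar>^2 \<le> \<bar>Z v x\<bar>^2" unfolding T_def using M clip_abs by (intro power_mono) auto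
        thus "(T v x)^2 \<le> (Z v x)^2" by simp
      qed
      also have "\<dots> \<le> ennreal s2" by (rule sq[OF v])
      finally show ?thesis using s2 by (simp add: ennreal_le_iff)
    qed
    finally show ?thesis .
  qed
  define lam where "lam = min (real n / (2 * M)) (sqrt (real n * L / s2))"
  have lam0: "0 < lam" unfolding lam_def using M s2 n0 L1 by auto
  have lamle: "lam \<le> real n / (2 * M)" unfolding lam_def by simp
  have mgf1: "(\<integral>\<^sup>+\<omega>. ennreal (exp (\<sigma> * lam * ((1 / real n) * (\<Sum>i<n. Y v (\<omega> i))))) \<partial>Pn)
              \<le> ennreal (exp (lam^2 * s2 / real n))" if v: "v \<in> V" and \<sigma>: "\<bar>\<sigma>\<bar> = 1" for v \<sigma>
  proof -
    define t where "t = \<sigma> * lam / real n"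
    have tb: "\<bar>t\<bar> * (2 * M) \<le> 1"
    proof -
      have "\<bar>t\<bar> = lam / real n" using \<sigma> lam0 n0 by (simp add: t_def abs_mult)
      hence e: "\<bar>t\<bar> * (2 * M) = (lam * (2 * M)) / real n" by simp
      have "lam * (2 * M) \<le> real n" using lamle M by (simp add: field_simps)
      thus ?thesis unfolding e using n0 by (simp add: divide_le_eq)
    qed
    have "(\<integral>\<^sup>+\<omega>. ennreal (exp (\<sigma> * lam * ((1 / real n) * (\<Sum>i<n. Y v (\<omega> i))))) \<partial>Pn)
        = (\<integral>\<^sup>+\<omega>. ennreal (exp (t * (\<Sum>i<n. Y v (\<omega> i)))) \<partial>Pn)"
      by (simp add: t_def)
    also have "\<dots> = (\<integral>\<^sup>+x. ennreal (exp (t * Y v x)) \<partial>F) ^ n"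
      unfolding Pn_def by (rule mgf_prod[OF P Ym[OF v]])
    also have "\<dots> \<le> ennreal (exp (t^2 * s2)) ^ n"
      by (intro power_mono mgf_bounded[OF P Ym[OF v] Yb[OF v] Ymean[OF v] Yvar[OF v] tb]) simp
    also have "\<dots> = ennreal (exp (lam^2 * s2 / real n))"
    proof -
      have "ennreal (exp (t^2 * s2)) ^ n = ennreal (exp (t^2 * s2) ^ n)" by (simp add: ennreal_power)
      also have "exp (t^2 * s2) ^ n = exp (real n * (t^2 * s2))" by (simp add: exp_of_nat_mult)
      also have "real n * (t^2 * s2) = lam^2 * s2 / real n"
        using \<sigma> n0 by (simp add: t_def power2_eq_square field_simps abs_mult)
          (metis abs_mult_self_eq mult.assoc mult.left_commute mult_1)
      finally show ?thesis .
    qed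
    finally show ?thesis .
  qed
  define E where "E = exp (lam^2 * s2 / real n)"
  define U where "U = 3 * N * E"
  define S where "S v \<omega> = (1 / real n) * (\<Sum>i<n. Y v (\<omega> i))" for v \<omega>
  define W where "W \<omega> = (\<Sum>v\<in>V. exp (1 * lam * S v \<omega>) + exp ((-1) * lam * S v \<omega>))" for \<omega>
  have E1: "1 \<le> E" unfolding E_def using s2 n0 by simp
  have U0: "0 < U" unfolding U_def using E1 N1 by simp
  have lnU: "ln U = L + lam^2 * s2 / real n"
    unfolding U_def L_def E_def using N1 by (simp add: ln_mult)
  have lnU1: "1 \<le> ln U" using lnU L1 s2 n0 by (smt (verit) divide_nonneg_pos mult_nonneg_nonneg zero_le_power2)
  have Wpos: "0 < W \<omega>" for \<omega> unfolding W_def using fin ne by (intro sum_pos) (auto intro: add_pos_pos)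
  have aS: "\<bar>S v \<omega>\<bar> \<le> (ln U - 1) / lam + W \<omega> / (lam * U)" if v: "v \<in> V" for v \<omega>
  proof -
    have "exp (lam * \<bar>S v \<omega>\<bar>) \<le> exp (1 * lam * S v \<omega>) + exp ((-1) * lam * S v \<omega>)"
      by (cases "S v \<omega> \<ge> 0") (auto simp: add_increasing add_increasing2)
    also have "\<dots> \<le> W \<omega>" unfolding W_def using fin v
      by (intro member_le_sum[where f="\<lambda>v. exp (1 * lam * S v \<omega>) + exp ((-1) * lam * S v \<omega>)"])
        (auto intro: add_nonneg_nonneg)
    finally have "ln (exp (lam * \<bar>S v \<omega>\<bar>)) \<le> ln (W \<omega>)" using Wpos by (subst ln_le_cancel_iff) auto
    hence "lam * \<bar>S v \<omega>\<bar> \<le> ln (W \<omega>)" by simp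
    also have "ln (W \<omega>) = ln U + ln (W \<omega> / U)" using Wpos[of \<omega>] U0 by (simp add: ln_div)
    also have "ln (W \<omega> / U) \<le> W \<omega> / U - 1" using Wpos U0 by (intro ln_le_minus_one) auto
    finally have "lam * \<bar>S v \<omega>\<bar> \<le> (ln U - 1) + W \<omega> / U" by simp
    hence "\<bar>S v \<omega>\<bar> \<le> ((ln U - 1) + W \<omega> / U) / lam" using lam0 by (simp add: field_simps)
    thus ?thesis using lam0 U0 by (simp add: add_divide_distrib mult.commute)
  qed
  define RS where "RS \<omega> = (1 / real n) * (\<Sum>i<n. \<Sum>v\<in>V. \<bar>R v (\<omega> i)\<bar>)" for \<omega>
  have pw: "\<bar>(1 / real n) * (\<Sum>i<n. Z v (\<omega> i)) - integral\<^sup>L F (Z v)\<bar>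
            \<le> (ln U - 1) / lam + W \<omega> / (lam * U) + RS \<omega> + \<epsilon>" if v: "v \<in> V" for v \<omega>
  proof -
    have Zd: "Z v x = Y v x + mT v + R v x" for x by (simp add: Y_def R_def)
    have "(\<Sum>i<n. Z v (\<omega> i)) = (\<Sum>i<n. Y v (\<omega> i)) + real n * mT v + (\<Sum>i<n. R v (\<omega> i))"
      by (simp add: Zd sum.distrib)
    hence d: "(1 / real n) * (\<Sum>i<n. Z v (\<omega> i)) - integral\<^sup>L F (Z v)
        = S v \<omega> + (1 / real n) * (\<Sum>i<n. R v (\<omega> i)) - integral\<^sup>L F (R v)"
      using n0 EZ[OF v] by (simp add: S_def field_simps)
    have a2: "\<bar>(1 / real n) * (\<Sum>i<n. R v (\<omega> i))\<bar> \<le> RS \<omega>"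
    proof -
      have "\<bar>\<Sum>i<n. R v (\<omega> i)\<bar> \<le> (\<Sum>i<n. \<bar>R v (\<omega> i)\<bar>)" by (rule sum_abs)
      also have "\<dots> \<le> (\<Sum>i<n. \<Sum>v\<in>V. \<bar>R v (\<omega> i)\<bar>)"
        using fin v by (intro sum_mono member_le_sum) auto
      finally show ?thesis using n0 by (simp add: RS_def abs_mult divide_right_mono)
    qed
    show ?thesis unfolding d using aS[OF v, of \<omega>] a2 ER[OF v] by linarith
  qed
  have pwM: "Max ((\<lambda>v. \<bar>(1 / real n) * (\<Sum>i<n. Z v (\<omega> i)) - integral\<^sup>L F (Z v)\<bar>) ` V)
            \<le> (ln U - 1) / lam + W \<omega> / (lam * U) + RS \<omega> + \<epsilon>" for \<omega>
    using fin ne pw by (subst Max_le_iff) auto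
  define a where "a = (ln U - 1) / lam"
  define b where "b = 1 / (lam * U)"
  have a0: "0 \<le> a" unfolding a_def using lnU1 lam0 by simp
  have b0: "0 \<le> b" unfolding b_def using lam0 U0 by simp
  define ep where "ep \<sigma> v \<omega> = ennreal (exp (\<sigma> * lam * ((1 / real n) * (\<Sum>i<n. Y v (\<omega> i)))))" for \<sigma> v \<omega>
  define Bd where "Bd \<omega> = ennreal a + ennreal b * (\<Sum>v\<in>V. ep 1 v \<omega> + ep (-1) v \<omega>)
      + ennreal (1 / real n) * (\<Sum>i<n. \<Sum>v\<in>V. ennreal \<bar>R v (\<omega> i)\<bar>) + ennreal \<epsilon>" for \<omega>
  have RS0: "0 \<le> RS \<omega>" for \<omega> unfolding RS_def by (intro mult_nonneg_nonneg sum_nonneg) auto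
  have W0: "0 \<le> W \<omega>" for \<omega> using Wpos[of \<omega>] by simp
  have eW: "ennreal (W \<omega>) = (\<Sum>v\<in>V. ep 1 v \<omega> + ep (-1) v \<omega>)" for \<omega>
  proof -
    have "ennreal (W \<omega>) = (\<Sum>v\<in>V. ennreal (exp (1 * lam * S v \<omega>) + exp ((-1) * lam * S v \<omega>)))"
      unfolding W_def by (rule sum_ennreal[symmetric]) (auto intro: add_nonneg_nonneg)
    also have "\<dots> = (\<Sum>v\<in>V. ep 1 v \<omega> + ep (-1) v \<omega>)"
      by (intro sum.cong refl) (simp add: ep_def S_def del: mult_minus_left mult_1)
    finally show ?thesis .
  qed
  have eRS: "ennreal (RS \<omega>) = ennreal (1 / real n) * (\<Sum>i<n. \<Sum>v\<in>V. ennreal \<bar>R v (\<omega> i)\<bar>)" for \<omega>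
  proof -
    have "(\<Sum>i<n. \<Sum>v\<in>V. ennreal \<bar>R v (\<omega> i)\<bar>) = (\<Sum>i<n. ennreal (\<Sum>v\<in>V. \<bar>R v (\<omega> i)\<bar>))"
      by (intro sum.cong refl sum_ennreal) auto
    also have "\<dots> = ennreal (\<Sum>i<n. \<Sum>v\<in>V. \<bar>R v (\<omega> i)\<bar>)"
      by (intro sum_ennreal) (auto intro: sum_nonneg)
    finally show ?thesis unfolding RS_def by (metis ennreal_mult' of_nat_0_le_iff zero_le_divide_1_iff)
  qed
  have pwB: "ennreal (Max ((\<lambda>v. \<bar>(1 / real n) * (\<Sum>i<n. Z v (\<omega> i)) - integral\<^sup>L F (Z v)\<bar>) ` V)) \<le> Bd \<omega>" for \<omega>
  proof -
    have "ennreal (Max ((\<lambda>v. \<bar>(1 / real n) * (\<Sum>i<n. Z v (\<omega> i)) - integral\<^sup>L F (Z v)\<bar>) ` V))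
        \<le> ennreal (a + b * W \<omega> + RS \<omega> + \<epsilon>)"
      using pwM[of \<omega>] by (intro ennreal_leI) (simp add: a_def b_def)
    also have "\<dots> = ennreal a + ennreal b * ennreal (W \<omega>) + ennreal (RS \<omega>) + ennreal \<epsilon>"
      using a0 b0 W0[of \<omega>] RS0[of \<omega>] eps by (simp add: ennreal_mult)
    also have "\<dots> = Bd \<omega>" unfolding Bd_def eW eRS ..
    finally show ?thesis .
  qed
  have epm: "ep \<sigma> v \<in> borel_measurable Pn" if v: "v \<in> V" for \<sigma> v
  proof -
    have "(\<lambda>\<omega>. \<Sum>i<n. Y v (\<omega> i)) \<in> borel_measurable Pn"
      unfolding Pn_def using comp_meas[OF Ym[OF v]] by (intro borel_measurable_sum) auto
    thus ?thesis unfolding ep_def by measurable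
  qed
  have Rcm: "(\<lambda>\<omega>. ennreal \<bar>R v (\<omega> i)\<bar>) \<in> borel_measurable Pn" if v: "v \<in> V" and i: "i < n" for v i
  proof -
    have "(\<lambda>\<omega>. R v (\<omega> i)) \<in> borel_measurable Pn" unfolding Pn_def using comp_meas[OF Rm[OF v] i] .
    thus ?thesis by measurable
  qed
  have m1: "(\<lambda>\<omega>. \<Sum>v\<in>V. ep 1 v \<omega> + ep (-1) v \<omega>) \<in> borel_measurable Pn"
    using epm by (intro borel_measurable_sum borel_measurable_add) auto
  have m2: "(\<lambda>\<omega>. \<Sum>i<n. \<Sum>v\<in>V. ennreal \<bar>R v (\<omega> i)\<bar>) \<in> borel_measurable Pn"
    using Rcm by (intro borel_measurable_sum) auto
  have intBd: "integral\<^sup>N Pn Bd = ennreal a + ennreal b * (\<Sum>v\<in>V. integral\<^sup>N Pn (ep 1 v) + integral\<^sup>N Pn (ep (-1) v))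
      + ennreal (1 / real n) * (\<Sum>i<n. \<Sum>v\<in>V. \<integral>\<^sup>+\<omega>. ennreal \<bar>R v (\<omega> i)\<bar> \<partial>Pn) + ennreal \<epsilon>"
  proof -
    have "integral\<^sup>N Pn Bd = (\<integral>\<^sup>+\<omega>. ennreal a + ennreal b * (\<Sum>v\<in>V. ep 1 v \<omega> + ep (-1) v \<omega>)
      + ennreal (1 / real n) * (\<Sum>i<n. \<Sum>v\<in>V. ennreal \<bar>R v (\<omega> i)\<bar>) \<partial>Pn) + (\<integral>\<^sup>+\<omega>. ennreal \<epsilon> \<partial>Pn)"
      unfolding Bd_def using m1 m2 by (intro nn_integral_add) auto
    also have "(\<integral>\<^sup>+\<omega>. ennreal a + ennreal b * (\<Sum>v\<in>V. ep 1 v \<omega> + ep (-1) v \<omega>)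
      + ennreal (1 / real n) * (\<Sum>i<n. \<Sum>v\<in>V. ennreal \<bar>R v (\<omega> i)\<bar>) \<partial>Pn)
      = (\<integral>\<^sup>+\<omega>. ennreal a + ennreal b * (\<Sum>v\<in>V. ep 1 v \<omega> + ep (-1) v \<omega>) \<partial>Pn)
        + (\<integral>\<^sup>+\<omega>. ennreal (1 / real n) * (\<Sum>i<n. \<Sum>v\<in>V. ennreal \<bar>R v (\<omega> i)\<bar>) \<partial>Pn)"
      using m1 m2 by (intro nn_integral_add) auto
    also have "(\<integral>\<^sup>+\<omega>. ennreal a + ennreal b * (\<Sum>v\<in>V. ep 1 v \<omega> + ep (-1) v \<omega>) \<partial>Pn)
      = (\<integral>\<^sup>+\<omega>. ennreal a \<partial>Pn) + (\<integral>\<^sup>+\<omega>. ennreal b * (\<Sum>v\<in>V. ep 1 v \<omega> + ep (-1) v \<omega>) \<partial>Pn)"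
      using m1 by (intro nn_integral_add) auto
    also have "(\<integral>\<^sup>+\<omega>. ennreal b * (\<Sum>v\<in>V. ep 1 v \<omega> + ep (-1) v \<omega>) \<partial>Pn)
      = ennreal b * (\<integral>\<^sup>+\<omega>. (\<Sum>v\<in>V. ep 1 v \<omega> + ep (-1) v \<omega>) \<partial>Pn)"
      using m1 by (rule nn_integral_cmult)
    also have "(\<integral>\<^sup>+\<omega>. (\<Sum>v\<in>V. ep 1 v \<omega> + ep (-1) v \<omega>) \<partial>Pn)
      = (\<Sum>v\<in>V. integral\<^sup>N Pn (ep 1 v) + integral\<^sup>N Pn (ep (-1) v))"
      using epm by (subst nn_integral_sum) (auto intro!: sum.cong nn_integral_add)
    also have "(\<integral>\<^sup>+\<omega>. ennreal (1 / real n) * (\<Sum>i<n. \<Sum>v\<in>V. ennreal \<bar>R v (\<omega> i)\<bar>) \<partial>Pn)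
      = ennreal (1 / real n) * (\<integral>\<^sup>+\<omega>. (\<Sum>i<n. \<Sum>v\<in>V. ennreal \<bar>R v (\<omega> i)\<bar>) \<partial>Pn)"
      using m2 by (rule nn_integral_cmult)
    also have "(\<integral>\<^sup>+\<omega>. (\<Sum>i<n. \<Sum>v\<in>V. ennreal \<bar>R v (\<omega> i)\<bar>) \<partial>Pn)
      = (\<Sum>i<n. \<Sum>v\<in>V. \<integral>\<^sup>+\<omega>. ennreal \<bar>R v (\<omega> i)\<bar> \<partial>Pn)"
    proof -
      have "(\<integral>\<^sup>+\<omega>. (\<Sum>i<n. \<Sum>v\<in>V. ennreal \<bar>R v (\<omega> i)\<bar>) \<partial>Pn)
          = (\<Sum>i<n. \<integral>\<^sup>+\<omega>. (\<Sum>v\<in>V. ennreal \<bar>R v (\<omega> i)\<bar>) \<partial>Pn)"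
        apply (rule nn_integral_sum) apply (rule borel_measurable_sum) apply (rule Rcm) by auto
      also have "\<dots> = (\<Sum>i<n. \<Sum>v\<in>V. \<integral>\<^sup>+\<omega>. ennreal \<bar>R v (\<omega> i)\<bar> \<partial>Pn)"
        apply (rule sum.cong[OF refl]) apply (rule nn_integral_sum) apply (rule Rcm) by auto
      finally show ?thesis .
    qed
    finally show ?thesis by (simp add: Pn.emeasure_space_1)
  qed
  have i1: "integral\<^sup>N Pn (ep \<sigma> v) \<le> ennreal E" if "v \<in> V" "\<bar>\<sigma>\<bar> = 1" for \<sigma> v
    using mgf1[OF that] unfolding ep_def E_def .
  have i2: "(\<integral>\<^sup>+\<omega>. ennreal \<bar>R v (\<omega> i)\<bar> \<partial>Pn) \<le> ennreal \<epsilon>" if v: "v \<in> V" and i: "i < n" for v i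
  proof -
    have "(\<integral>\<^sup>+\<omega>. ennreal \<bar>R v (\<omega> i)\<bar> \<partial>Pn) = (\<integral>\<^sup>+x. ennreal \<bar>R v x\<bar> \<partial>F)"
      unfolding Pn_def using Rm[OF v] by (intro marginal_nn[OF P _ i]) measurable
    also have "\<dots> \<le> ennreal \<epsilon>" using tl[OF v] by (simp add: R_def T_def)
    finally show ?thesis .
  qed
  have E0: "0 \<le> E" using E1 by simp
  have S1: "(\<Sum>v\<in>V. integral\<^sup>N Pn (ep 1 v) + integral\<^sup>N Pn (ep (-1) v)) \<le> ennreal (N * (2 * E))"
  proof -
    have "(\<Sum>v\<in>V. integral\<^sup>N Pn (ep 1 v) + integral\<^sup>N Pn (ep (-1) v)) \<le> (\<Sum>v\<in>V. ennreal (2 * E))"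
    proof (rule sum_mono)
      fix v assume v: "v \<in> V"
      have "integral\<^sup>N Pn (ep 1 v) + integral\<^sup>N Pn (ep (-1) v) \<le> ennreal E + ennreal E"
        using i1[OF v] by (intro add_mono) auto
      also have "\<dots> = ennreal (2 * E)" using E0 by (simp add: ennreal_plus[symmetric] del: ennreal_plus)
      finally show "integral\<^sup>N Pn (ep 1 v) + integral\<^sup>N Pn (ep (-1) v) \<le> ennreal (2 * E)" .
    qed
    also have "\<dots> = ennreal (N * (2 * E))" using E0 by (simp add: N_def ennreal_of_nat_eq_real_of_nat ennreal_mult)
    finally show ?thesis .
  qed
  have S2: "(\<Sum>i<n. \<Sum>v\<in>V. \<integral>\<^sup>+\<omega>. ennreal \<bar>R v (\<omega> i)\<bar> \<partial>Pn) \<le> ennreal (real n * (N * \<epsilon>))"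
  proof -
    have "(\<Sum>i<n. \<Sum>v\<in>V. \<integral>\<^sup>+\<omega>. ennreal \<bar>R v (\<omega> i)\<bar> \<partial>Pn) \<le> (\<Sum>i<n. \<Sum>v\<in>V. ennreal \<epsilon>)"
      using i2 by (intro sum_mono) auto
    also have "\<dots> = ennreal (real n * (N * \<epsilon>))" using eps by (simp add: N_def ennreal_mult ennreal_of_nat_eq_real_of_nat)
    finally show ?thesis .
  qed
  have key: "a + b * (N * (2 * E)) + (1 / real n) * (real n * (N * \<epsilon>)) + \<epsilon>
      \<le> 2 * sqrt (s2 * L / real n) + 2 * M * L / real n + 2 * N * \<epsilon>"
  proof -
    define b1 where "b1 = sqrt (real n * L / s2)"
    define q where "q = sqrt (s2 * L / real n)"
    have b1p: "0 < b1" unfolding b1_def using n0 L1 s2 by simp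
    have q0: "0 \<le> q" unfolding q_def using n0 L1 s2 by simp
    have q1: "b1 * q = L"
    proof -
      have "b1 * q = sqrt (real n * L / s2 * (s2 * L / real n))" unfolding b1_def q_def by (rule real_sqrt_mult[symmetric])
      also have "real n * L / s2 * (s2 * L / real n) = L^2" using n0 s2 by (simp add: field_simps power2_eq_square)
      finally show ?thesis using L1 by simp
    qed
    have q2: "b1 * s2 / real n = q"
    proof -
      have "q = sqrt (real n * L / s2 * (s2 / real n)^2)"
        unfolding q_def using n0 s2 by (simp add: field_simps power2_eq_square)
      also have "\<dots> = b1 * (s2 / real n)" unfolding b1_def real_sqrt_mult using n0 s2 by simp
      finally show ?thesis by simp
    qed
    have lamb1: "lam \<le> b1" unfolding lam_def b1_def by simp
    have t1: "L / lam \<le> 2 * M * L / real n + q"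
    proof (cases "real n / (2 * M) \<le> b1")
      case True
      hence "lam = real n / (2 * M)" unfolding lam_def b1_def by simp
      hence "L / lam = 2 * M * L / real n" using n0 M lam0 by (simp add: field_simps)
      thus ?thesis using q0 by simp
    next
      case False
      hence "lam = b1" unfolding lam_def b1_def by simp
      hence "L / lam = q" using q1 b1p by (auto simp: field_simps)
      moreover have "0 \<le> 2 * M * L / real n" using M L1 n0 by simp
      ultimately show ?thesis by simp
    qed
    have t2: "lam * s2 / real n \<le> q"
      unfolding q2[symmetric] using lamb1 s2 n0 by (intro divide_right_mono mult_right_mono) auto
    have bE: "b * (N * (2 * E)) = 2 / (3 * lam)"
      unfolding b_def U_def using N1 E1 lam0 by (simp add: field_simps)
    have "a + b * (N * (2 * E)) \<le> ln U / lam"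
      unfolding a_def bE using lam0 by (simp add: field_simps)
    also have "ln U / lam = L / lam + lam * s2 / real n"
      unfolding lnU using lam0 by (simp add: field_simps power2_eq_square)
    finally have "a + b * (N * (2 * E)) \<le> 2 * M * L / real n + 2 * q" using t1 t2 by linarith
    moreover have "(1 / real n) * (real n * (N * \<epsilon>)) + \<epsilon> \<le> 2 * N * \<epsilon>"
    proof -
      have "(1 / real n) * (real n * (N * \<epsilon>)) = N * \<epsilon>" using n0 by simp
      moreover have "1 * \<epsilon> \<le> N * \<epsilon>" using N1 eps by (intro mult_right_mono) auto
      ultimately show ?thesis by simp
    qed
    ultimately show ?thesis unfolding q_def by linarith
  qed
  have "(\<integral>\<^sup>+\<omega>. ennreal (Max ((\<lambda>v. \<bar>(1 / real n) * (\<Sum>i<n. Z v (\<omega> i)) - integral\<^sup>L F (Z v)\<bar>) ` V)) \<partial>Pn)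
      \<le> integral\<^sup>N Pn Bd" by (intro nn_integral_mono pwB)
  also have "\<dots> \<le> ennreal a + ennreal b * ennreal (N * (2 * E)) + ennreal (1 / real n) * ennreal (real n * (N * \<epsilon>)) + ennreal \<epsilon>"
    unfolding intBd by (intro add_mono mult_left_mono S1 S2) auto
  also have "\<dots> = ennreal (a + b * (N * (2 * E)) + (1 / real n) * (real n * (N * \<epsilon>)) + \<epsilon>)"
  proof -
    have X0: "0 \<le> N * (2 * E)" using N1 E0 by simp
    have Y0: "0 \<le> real n * (N * \<epsilon>)" using N1 eps by simp
    have e1: "ennreal b * ennreal (N * (2 * E)) = ennreal (b * (N * (2 * E)))"
      using b0 X0 by (rule ennreal_mult[symmetric])
    have e2: "ennreal (1 / real n) * ennreal (real n * (N * \<epsilon>)) = ennreal ((1 / real n) * (real n * (N * \<epsilon>)))"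
      using Y0 by (intro ennreal_mult[symmetric]) auto
    have p1: "0 \<le> b * (N * (2 * E))" using b0 X0 by simp
    have p2: "0 \<le> (1 / real n) * (real n * (N * \<epsilon>))" using N1 eps by (intro mult_nonneg_nonneg) auto
    show ?thesis unfolding e1 e2 using a0 p1 p2 eps by simp
  qed
  also have "\<dots> \<le> ennreal (2 * sqrt (s2 * L / real n) + 2 * M * L / real n + 2 * N * \<epsilon>)"
    by (intro ennreal_leI key)
  finally show ?thesis unfolding Pn_def L_def N_def .
qed

lemma pow4_sum: "0 \<le> a \<Longrightarrow> 0 \<le> b \<Longrightarrow> ((a::real) + b)^4 \<le> 8 * (a^4 + b^4)"
proof -
  assume a: "0 \<le> a" "0 \<le> b"
  have s: "(a + b)^2 \<le> 2 * (a^2 + b^2)"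
  proof -
    have "0 \<le> (a - b)^2" by simp
    thus ?thesis by (simp add: power2_eq_square algebra_simps)
  qed
  have s2: "(a^2 + b^2)^2 \<le> 2 * (a^4 + b^4)"
  proof -
    have "0 \<le> (a^2 - b^2)^2" by simp
    thus ?thesis by (simp add: power2_eq_square power4_eq_xxxx algebra_simps)
  qed
  have "(a + b)^4 = ((a + b)^2)^2" by simp
  also have "\<dots> \<le> (2 * (a^2 + b^2))^2" using s by (intro power_mono) auto
  also have "\<dots> = 4 * (a^2 + b^2)^2" by (simp add: power2_eq_square algebra_simps)
  also have "\<dots> \<le> 4 * (2 * (a^4 + b^4))" using s2 by simp
  finally show ?thesis by simp
qed

lemma G_props:
  fixes F :: "'a measure" and f :: "'a \<times> 'a \<Rightarrow> real" and B :: real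
  assumes P: "prob_space F" and fm: "f \<in> borel_measurable (F \<Otimes>\<^sub>M F)" and B: "1 \<le> B"
    and m2: "(\<integral>\<^sup>+z. ennreal ((f z)^2) \<partial>(F \<Otimes>\<^sub>M F)) \<le> ennreal 2"
    and m4: "(\<integral>\<^sup>+z. ennreal ((f z)^4) \<partial>(F \<Otimes>\<^sub>M F)) \<le> ennreal (2 * B^2)"
    and me: "(\<integral>\<^sup>+z. ennreal (exp (\<bar>f z\<bar> / B)) \<partial>(F \<Otimes>\<^sub>M F)) \<le> ennreal 2"
  defines "G \<equiv> \<lambda>x. (\<integral>y. f (x, y) \<partial>F) - integral\<^sup>L (F \<Otimes>\<^sub>M F) f"
  shows "G \<in> borel_measurable F" "integrable F G" "integral\<^sup>L F G = 0"
    "(\<integral>\<^sup>+x. ennreal (exp (\<bar>G x\<bar> / B)) \<partial>F) \<le> ennreal (2 * exp 3)"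
    "(\<integral>\<^sup>+x. ennreal ((G x)^4) \<partial>F) \<le> ennreal (664 * B^2)"
proof -
  interpret prob_space F by (rule P)
  interpret PP: pair_prob_space F F by unfold_locales
  define H where "H x = (\<integral>y. f (x, y) \<partial>F)" for x
  define \<mu> where "\<mu> = integral\<^sup>L (F \<Otimes>\<^sub>M F) f"
  have Gd: "G x = H x - \<mu>" for x unfolding G_def H_def \<mu>_def by simp
  have intf: "integrable (F \<Otimes>\<^sub>M F) f"
    using square_int[OF PP.prob_space_axioms fm m2] .
  have Hm: "H \<in> borel_measurable F"
  proof -
    have "(\<lambda>x. \<integral>y. (\<lambda>x y. f (x, y)) x y \<partial>F) \<in> borel_measurable F"
      by (rule borel_measurable_lebesgue_integral) (simp add: fm)
    thus ?thesis unfolding H_def by simp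
  qed
  show Gm: "G \<in> borel_measurable F" unfolding Gd using Hm by measurable
  have intH: "integrable F H" unfolding H_def using intf by (rule PP.integrable_fst')
  have EH: "integral\<^sup>L F H = \<mu>" unfolding H_def \<mu>_def using intf by (rule PP.integral_fst')
  show intG: "integrable F G" unfolding Gd using intH by auto
  show "integral\<^sup>L F G = 0" unfolding Gd using intH EH by (simp add: prob_space)
  have \<mu>b: "\<bar>\<mu>\<bar> \<le> 3"
  proof -
    have "ennreal (norm \<mu>) \<le> (\<integral>\<^sup>+z. ennreal (norm (f z)) \<partial>(F \<Otimes>\<^sub>M F))"
      unfolding \<mu>_def using intf by (rule integral_norm_bound_ennreal)
    also have "\<dots> \<le> (\<integral>\<^sup>+z. ennreal 1 + ennreal ((f z)^2) \<partial>(F \<Otimes>\<^sub>M F))"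
    proof (intro nn_integral_mono)
      fix z
      have "\<bar>f z\<bar> \<le> 1 + (f z)^2"
      proof (cases "\<bar>f z\<bar> \<le> 1")
        case True thus ?thesis by (smt (verit) zero_le_power2)
      next
        case False
        hence "\<bar>f z\<bar> \<le> \<bar>f z\<bar> * \<bar>f z\<bar>" by (intro mult_le_cancel_left1[THEN iffD2]) auto
        thus ?thesis by (simp add: power2_eq_square abs_mult[symmetric])
      qed
      hence "ennreal (norm (f z)) \<le> ennreal (1 + (f z)^2)" by (intro ennreal_leI) simp
      also have "\<dots> = ennreal 1 + ennreal ((f z)^2)" by (intro ennreal_plus) auto
      finally show "ennreal (norm (f z)) \<le> ennreal 1 + ennreal ((f z)^2)" .
    qed
    also have "\<dots> = 1 + (\<integral>\<^sup>+z. ennreal ((f z)^2) \<partial>(F \<Otimes>\<^sub>M F))"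
      using fm by (subst nn_integral_add) (auto simp: PP.emeasure_space_1)
    also have "\<dots> \<le> 1 + ennreal 2" using m2 by (intro add_left_mono)
    also have "\<dots> = ennreal 3" by (simp add: ennreal_plus[symmetric] del: ennreal_plus)
    finally have "ennreal (norm \<mu>) \<le> ennreal 3" .
    thus ?thesis by (subst (asm) ennreal_le_iff) auto
  qed
  have sec: "(\<lambda>y. f (x, y)) \<in> borel_measurable F" if "x \<in> space F" for x
    using measurable_Pair2[OF fm that] .
  have jexp: "ennreal (exp (\<bar>H x\<bar> / B)) \<le> (\<integral>\<^sup>+y. ennreal (exp (\<bar>f (x, y)\<bar> / B)) \<partial>F)" if x: "x \<in> space F" for x
    unfolding H_def
  proof (rule jensen_nn[OF P sec[OF x], where \<phi>="\<lambda>t. exp (t / B)"])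
    show "(\<lambda>y. exp (\<bar>f (x, y)\<bar> / B)) \<in> borel_measurable F" using sec[OF x] by measurable
    show "\<And>a b. 0 \<le> a \<Longrightarrow> a \<le> b \<Longrightarrow> exp (a / B) \<le> exp (b / B)" using B by (simp add: divide_right_mono)
    show "\<And>a. 0 \<le> a \<Longrightarrow> 0 \<le> exp (a / B)" by simp
    show "\<exists>c. \<forall>y\<ge>0. exp (m / B) + c * (y - m) \<le> exp (y / B)" for m
    proof (intro exI allI impI)
      fix y :: real
      have "exp (m / B) * (1 + (y / B - m / B)) \<le> exp (y / B)" by (rule exp_tangent)
      thus "exp (m / B) + exp (m / B) / B * (y - m) \<le> exp (y / B)"
        using B by (simp add: field_simps)
    qed
  qed
  have j4: "ennreal ((H x)^4) \<le> (\<integral>\<^sup>+y. ennreal ((f (x, y))^4) \<partial>F)" if x: "x \<in> space F" for x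
  proof -
    have "ennreal (\<bar>H x\<bar>^4) \<le> (\<integral>\<^sup>+y. ennreal (\<bar>f (x, y)\<bar>^4) \<partial>F)"
      unfolding H_def
    proof (rule jensen_nn[OF P sec[OF x], where \<phi>="\<lambda>t. t^4"])
      show "(\<lambda>y. \<bar>f (x, y)\<bar>^4) \<in> borel_measurable F" using sec[OF x] by measurable
      show "\<And>a b::real. 0 \<le> a \<Longrightarrow> a \<le> b \<Longrightarrow> a^4 \<le> b^4" by (metis power_mono)
      show "\<And>a::real. 0 \<le> a \<Longrightarrow> 0 \<le> a^4" by simp
      show "\<exists>c. \<forall>y\<ge>0. m^4 + c * (y - m) \<le> y^4" for m :: real
        using pow4_tangent[of m] by (intro exI[of _ "4 * m^3"]) auto
    qed
    moreover have "\<bar>r\<bar>^4 = r^4" for r :: real by simp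
    ultimately show ?thesis by simp
  qed
  have Hexp: "(\<integral>\<^sup>+x. ennreal (exp (\<bar>H x\<bar> / B)) \<partial>F) \<le> ennreal 2"
  proof -
    have "(\<integral>\<^sup>+x. ennreal (exp (\<bar>H x\<bar> / B)) \<partial>F) \<le> (\<integral>\<^sup>+x. \<integral>\<^sup>+y. ennreal (exp (\<bar>f (x, y)\<bar> / B)) \<partial>F \<partial>F)"
      using jexp by (intro nn_integral_mono) auto
    also have "\<dots> = (\<integral>\<^sup>+z. ennreal (exp (\<bar>f z\<bar> / B)) \<partial>(F \<Otimes>\<^sub>M F))"
      by (intro nn_integral_fst measurable_compose[OF fm]) auto
    also have "\<dots> \<le> ennreal 2" using me .
    finally show ?thesis .
  qed
  have H4: "(\<integral>\<^sup>+x. ennreal ((H x)^4) \<partial>F) \<le> ennreal (2 * B^2)"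
  proof -
    have "(\<integral>\<^sup>+x. ennreal ((H x)^4) \<partial>F) \<le> (\<integral>\<^sup>+x. \<integral>\<^sup>+y. ennreal ((f (x, y))^4) \<partial>F \<partial>F)"
      using j4 by (intro nn_integral_mono) auto
    also have "\<dots> = (\<integral>\<^sup>+z. ennreal ((f z)^4) \<partial>(F \<Otimes>\<^sub>M F))"
      by (intro nn_integral_fst measurable_compose[OF fm]) auto
    also have "\<dots> \<le> ennreal (2 * B^2)" using m4 .
    finally show ?thesis .
  qed
  have GH: "\<bar>G x\<bar> \<le> \<bar>H x\<bar> + 3" for x unfolding Gd using \<mu>b by linarith
  show "(\<integral>\<^sup>+x. ennreal (exp (\<bar>G x\<bar> / B)) \<partial>F) \<le> ennreal (2 * exp 3)"
  proof -
    have "(\<integral>\<^sup>+x. ennreal (exp (\<bar>G x\<bar> / B)) \<partial>F) \<le> (\<integral>\<^sup>+x. ennreal (exp 3) * ennreal (exp (\<bar>H x\<bar> / B)) \<partial>F)"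
    proof (intro nn_integral_mono)
      fix x
      have "\<bar>G x\<bar> / B \<le> (\<bar>H x\<bar> + 3) / B" using GH[of x] B by (intro divide_right_mono) auto
      also have "\<dots> = \<bar>H x\<bar> / B + 3 / B" by (simp add: add_divide_distrib)
      also have "3 / B \<le> 3" using B by (simp add: divide_le_eq)
      finally have "exp (\<bar>G x\<bar> / B) \<le> exp (3 + \<bar>H x\<bar> / B)" by simp
      also have "\<dots> = exp 3 * exp (\<bar>H x\<bar> / B)" by (simp add: exp_add)
      finally show "ennreal (exp (\<bar>G x\<bar> / B)) \<le> ennreal (exp 3) * ennreal (exp (\<bar>H x\<bar> / B))"
        by (simp add: ennreal_mult[symmetric] ennreal_leI)
    qed
    also have "\<dots> = ennreal (exp 3) * (\<integral>\<^sup>+x. ennreal (exp (\<bar>H x\<bar> / B)) \<partial>F)"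
      by (intro nn_integral_cmult measurable_compose[OF Hm]) auto
    also have "\<dots> \<le> ennreal (exp 3) * ennreal 2" using Hexp by (intro mult_left_mono) auto
    also have "\<dots> = ennreal (2 * exp 3)" by (subst ennreal_mult) (auto simp: mult.commute)
    finally show ?thesis .
  qed
  show "(\<integral>\<^sup>+x. ennreal ((G x)^4) \<partial>F) \<le> ennreal (664 * B^2)"
  proof -
    have "(\<integral>\<^sup>+x. ennreal ((G x)^4) \<partial>F) \<le> (\<integral>\<^sup>+x. ennreal 8 * ennreal ((H x)^4) + ennreal 648 \<partial>F)"
    proof (intro nn_integral_mono)
      fix x
      have "(G x)^4 = \<bar>G x\<bar>^4" by simp
      also have "\<dots> \<le> (\<bar>H x\<bar> + 3)^4" using GH[of x] by (intro power_mono) auto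
      also have "\<dots> \<le> 8 * (\<bar>H x\<bar>^4 + 3^4)" by (intro pow4_sum) auto
      also have "\<dots> = 8 * (H x)^4 + 648" by simp
      finally have "ennreal ((G x)^4) \<le> ennreal (8 * (H x)^4 + 648)" by (intro ennreal_leI)
      also have "\<dots> = ennreal 8 * ennreal ((H x)^4) + ennreal 648"
        by (simp add: ennreal_mult)
      finally show "ennreal ((G x)^4) \<le> ennreal 8 * ennreal ((H x)^4) + ennreal 648" .
    qed
    also have "\<dots> = ennreal 8 * (\<integral>\<^sup>+x. ennreal ((H x)^4) \<partial>F) + ennreal 648"
      using Hm by (subst nn_integral_add) (auto simp: nn_integral_cmult emeasure_space_1)
    also have "\<dots> \<le> ennreal 8 * ennreal (2 * B^2) + ennreal 648" using H4 by (intro add_mono mult_left_mono) auto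
    also have "\<dots> = ennreal (16 * B^2 + 648)" by (subst ennreal_plus) (auto simp: ennreal_mult)
    also have "\<dots> \<le> ennreal (664 * B^2)"
    proof (intro ennreal_leI)
      have "1 \<le> B^2" using B by (simp add: one_le_power)
      thus "16 * B^2 + 648 \<le> 664 * B^2" by simp
    qed
    finally show ?thesis .
  qed
qed

lemma sq_le_exp: assumes "0 \<le> x" shows "(x::real)^2 / 4 \<le> 8 * exp (x / 4)"
proof -
  have "1 + x/4 + (x/4)^2 / 2 \<le> exp (x / 4)" using assms by (intro exp_lower_Taylor_quadratic) auto
  moreover have "(x/4)^2 / 2 \<le> 1 + x/4 + (x/4)^2 / 2" using assms by simp
  ultimately have "(x/4)^2 / 2 \<le> exp (x/4)" by linarith
  thus ?thesis by (simp add: power2_eq_square field_simps)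
qed

lemma tail_pt:
  fixes ga gb B M :: real
  assumes B: "1 \<le> B" and M: "0 \<le> M"
  shows "\<bar>ga * gb - clip M (ga * gb)\<bar> \<le> 8 * B^2 * exp (- sqrt M / (2 * B)) * ((exp (\<bar>ga\<bar> / B) + exp (\<bar>gb\<bar> / B)) / 2)"
proof (cases "\<bar>ga * gb\<bar> \<le> M")
  case True
  hence "ga * gb - clip M (ga * gb) = 0" by (simp add: clip_small)
  thus ?thesis by simp
next
  case False
  define z where "z = ga * gb"
  define x where "x = (\<bar>ga\<bar> + \<bar>gb\<bar>) / B"
  have x0: "0 \<le> x" unfolding x_def using B by simp
  have zc: "\<bar>z - clip M z\<bar> \<le> \<bar>z\<bar>" using M by (simp add: clip_def)
  have zx: "\<bar>z\<bar> \<le> B^2 * x^2 / 4"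
  proof -
    have "\<bar>z\<bar> = \<bar>ga\<bar> * \<bar>gb\<bar>" by (simp add: z_def abs_mult)
    also have "\<dots> \<le> (\<bar>ga\<bar> + \<bar>gb\<bar>)^2 / 4"
    proof -
      have "0 \<le> (\<bar>ga\<bar> - \<bar>gb\<bar>)^2" by simp
      thus ?thesis by (simp add: power2_eq_square algebra_simps)
    qed
    also have "(\<bar>ga\<bar> + \<bar>gb\<bar>) = B * x" unfolding x_def using B by simp
    finally show ?thesis by (simp add: power_mult_distrib)
  qed
  have Mz: "M < \<bar>z\<bar>" using False by (simp add: z_def)
  have sM: "sqrt M / (2 * B) \<le> x / 4"
  proof -
    have "(B * x / 2)^2 = B^2 * x^2 / 4" by (simp add: power_mult_distrib power_divide)
    hence "M \<le> (B * x / 2)^2" using Mz zx by linarith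
    hence "sqrt M \<le> sqrt ((B * x / 2)^2)" by (rule real_sqrt_le_mono)
    also have "\<dots> = B * x / 2" using B x0 by simp
    finally show ?thesis using B by (simp add: field_simps)
  qed
  have "\<bar>z - clip M z\<bar> \<le> B^2 * (x^2 / 4)" using zc zx by simp
  also have "\<dots> \<le> B^2 * (8 * exp (x / 4))" using sq_le_exp[OF x0] by (intro mult_left_mono) auto
  also have "\<dots> \<le> B^2 * (8 * exp (x / 4) * exp (x / 4 - sqrt M / (2 * B)))"
  proof -
    have "1 \<le> exp (x / 4 - sqrt M / (2 * B))" using sM by simp
    thus ?thesis by (intro mult_left_mono) (auto simp: mult_le_cancel_left1)
  qed
  also have "\<dots> = 8 * B^2 * exp (- sqrt M / (2 * B)) * exp (x / 2)"
    by (simp add: exp_add[symmetric] exp_diff) (simp add: exp_add[symmetric] field_simps)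
  also have "exp (x / 2) \<le> (exp (\<bar>ga\<bar> / B) + exp (\<bar>gb\<bar> / B)) / 2"
  proof -
    define u where "u = exp (\<bar>ga\<bar> / (2 * B))"
    define v where "v = exp (\<bar>gb\<bar> / (2 * B))"
    have "exp (x / 2) = u * v" unfolding u_def v_def x_def by (simp add: exp_add[symmetric] add_divide_distrib)
    moreover have "exp (\<bar>ga\<bar> / B) = u^2" unfolding u_def by (simp add: power2_eq_square exp_add[symmetric])
    moreover have "exp (\<bar>gb\<bar> / B) = v^2" unfolding v_def by (simp add: power2_eq_square exp_add[symmetric])
    moreover have "u * v \<le> (u^2 + v^2) / 2"
    proof -
      have "0 \<le> (u - v)^2" by simp
      thus ?thesis by (simp add: power2_eq_square algebra_simps)
    qed
    ultimately show ?thesis by simp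
  qed
  hence "8 * B^2 * exp (- sqrt M / (2 * B)) * exp (x / 2)
      \<le> 8 * B^2 * exp (- sqrt M / (2 * B)) * ((exp (\<bar>ga\<bar> / B) + exp (\<bar>gb\<bar> / B)) / 2)"
    by (intro mult_left_mono) auto
  finally show ?thesis by (simp add: z_def)
qed

lemma tail_int:
  fixes F :: "'a measure" and Ga Gb :: "'a \<Rightarrow> real"
  assumes P: "prob_space F" and Gam: "Ga \<in> borel_measurable F" and Gbm: "Gb \<in> borel_measurable F"
    and ea: "(\<integral>\<^sup>+x. ennreal (exp (\<bar>Ga x\<bar> / B)) \<partial>F) \<le> ennreal C"
    and eb: "(\<integral>\<^sup>+x. ennreal (exp (\<bar>Gb x\<bar> / B)) \<partial>F) \<le> ennreal C"
    and C: "0 \<le> C" and B: "1 \<le> B" and M: "0 \<le> M"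
  shows "(\<integral>\<^sup>+x. ennreal \<bar>Ga x * Gb x - clip M (Ga x * Gb x)\<bar> \<partial>F)
     \<le> ennreal (8 * B^2 * exp (- sqrt M / (2 * B)) * C)"
proof -
  define c where "c = 8 * B^2 * exp (- sqrt M / (2 * B)) / 2"
  have c0: "0 \<le> c" unfolding c_def by simp
  have "(\<integral>\<^sup>+x. ennreal \<bar>Ga x * Gb x - clip M (Ga x * Gb x)\<bar> \<partial>F)
      \<le> (\<integral>\<^sup>+x. ennreal c * (ennreal (exp (\<bar>Ga x\<bar> / B)) + ennreal (exp (\<bar>Gb x\<bar> / B))) \<partial>F)"
  proof (intro nn_integral_mono)
    fix x
    have "\<bar>Ga x * Gb x - clip M (Ga x * Gb x)\<bar> \<le> c * (exp (\<bar>Ga x\<bar> / B) + exp (\<bar>Gb x\<bar> / B))"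
      using tail_pt[OF B M, of "Ga x" "Gb x"] by (simp add: c_def)
    hence "ennreal \<bar>Ga x * Gb x - clip M (Ga x * Gb x)\<bar> \<le> ennreal (c * (exp (\<bar>Ga x\<bar> / B) + exp (\<bar>Gb x\<bar> / B)))"
      by (rule ennreal_leI)
    also have "\<dots> = ennreal c * (ennreal (exp (\<bar>Ga x\<bar> / B)) + ennreal (exp (\<bar>Gb x\<bar> / B)))"
      using c0 by (simp add: ennreal_mult)
    finally show "ennreal \<bar>Ga x * Gb x - clip M (Ga x * Gb x)\<bar> \<le> ennreal c * (ennreal (exp (\<bar>Ga x\<bar> / B)) + ennreal (exp (\<bar>Gb x\<bar> / B)))" .
  qed
  also have "\<dots> = ennreal c * ((\<integral>\<^sup>+x. ennreal (exp (\<bar>Ga x\<bar> / B)) \<partial>F) + (\<integral>\<^sup>+x. ennreal (exp (\<bar>Gb x\<bar> / B)) \<partial>F))"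
  proof -
    have ma: "(\<lambda>x. ennreal (exp (\<bar>Ga x\<bar> / B))) \<in> borel_measurable F"
      by (intro measurable_compose[OF Gam]) auto
    have mb: "(\<lambda>x. ennreal (exp (\<bar>Gb x\<bar> / B))) \<in> borel_measurable F"
      by (intro measurable_compose[OF Gbm]) auto
    show ?thesis using ma mb by (simp add: nn_integral_cmult nn_integral_add)
  qed
  also have "\<dots> \<le> ennreal c * (ennreal C + ennreal C)" using ea eb by (intro mult_left_mono add_mono) auto
  also have "\<dots> = ennreal (8 * B^2 * exp (- sqrt M / (2 * B)) * C)"
    using c0 C by (simp add: ennreal_mult[symmetric] ennreal_plus[symmetric] c_def del: ennreal_plus)
  finally show ?thesis .
qed

lemma sq_int:
  fixes F :: "'a measure" and Ga Gb :: "'a \<Rightarrow> real"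
  assumes Gam: "Ga \<in> borel_measurable F" and Gbm: "Gb \<in> borel_measurable F"
    and ea: "(\<integral>\<^sup>+x. ennreal ((Ga x)^4) \<partial>F) \<le> ennreal s"
    and eb: "(\<integral>\<^sup>+x. ennreal ((Gb x)^4) \<partial>F) \<le> ennreal s" and s: "0 \<le> s"
  shows "(\<integral>\<^sup>+x. ennreal ((Ga x * Gb x)^2) \<partial>F) \<le> ennreal s"
proof -
  have "(\<integral>\<^sup>+x. ennreal ((Ga x * Gb x)^2) \<partial>F) \<le> (\<integral>\<^sup>+x. ennreal (1/2) * (ennreal ((Ga x)^4) + ennreal ((Gb x)^4)) \<partial>F)"
  proof (intro nn_integral_mono)
    fix x
    have "(Ga x * Gb x)^2 \<le> (1/2) * ((Ga x)^4 + (Gb x)^4)"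
    proof -
      have "0 \<le> ((Ga x)^2 - (Gb x)^2)^2" by simp
      thus ?thesis by (simp add: power2_eq_square power4_eq_xxxx algebra_simps)
    qed
    hence "ennreal ((Ga x * Gb x)^2) \<le> ennreal ((1/2) * ((Ga x)^4 + (Gb x)^4))" by (rule ennreal_leI)
    also have "\<dots> = ennreal (1/2) * (ennreal ((Ga x)^4) + ennreal ((Gb x)^4))"
    proof -
      have "ennreal ((1/2) * ((Ga x)^4 + (Gb x)^4)) = ennreal (1/2) * ennreal ((Ga x)^4 + (Gb x)^4)"
        by (rule ennreal_mult') simp
      moreover have "ennreal ((Ga x)^4 + (Gb x)^4) = ennreal ((Ga x)^4) + ennreal ((Gb x)^4)"
        by (rule ennreal_plus) auto
      ultimately show ?thesis by simp
    qed
    finally show "ennreal ((Ga x * Gb x)^2) \<le> ennreal (1/2) * (ennreal ((Ga x)^4) + ennreal ((Gb x)^4))" .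
  qed
  also have "\<dots> = ennreal (1/2) * ((\<integral>\<^sup>+x. ennreal ((Ga x)^4) \<partial>F) + (\<integral>\<^sup>+x. ennreal ((Gb x)^4) \<partial>F))"
  proof -
    have ma: "(\<lambda>x. ennreal ((Ga x)^4)) \<in> borel_measurable F" by (intro measurable_compose[OF Gam]) auto
    have mb: "(\<lambda>x. ennreal ((Gb x)^4)) \<in> borel_measurable F" by (intro measurable_compose[OF Gbm]) auto
    show ?thesis using ma mb by (simp add: nn_integral_cmult nn_integral_add)
  qed
  also have "\<dots> \<le> ennreal (1/2) * (ennreal s + ennreal s)" using ea eb by (intro mult_left_mono add_mono) auto
  also have "\<dots> = ennreal s"
  proof -
    have "ennreal s + ennreal s = ennreal (s + s)" by (rule ennreal_plus[symmetric, OF s s])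
    moreover have "ennreal (1/2) * ennreal (s + s) = ennreal ((1/2) * (s + s))" using s by (intro ennreal_mult[symmetric]) auto
    ultimately show ?thesis by simp
  qed
  finally show ?thesis .
qed

lemma ln2_half: "1/2 \<le> ln (2::real)"
proof -
  have "exp (1/2::real)^2 = exp 1" by (simp add: power2_eq_square exp_add[symmetric])
  also have "\<dots> \<le> 2^2" using exp_le by simp
  finally have "exp (1/2::real) \<le> 2" by (rule power2_le_imp_le) simp
  hence "ln (exp (1/2::real)) \<le> ln 2" by (subst ln_le_cancel_iff) auto
  thus ?thesis by simp
qed

lemma numeric:
  fixes n p :: nat and B N :: real
  assumes p: "2 \<le> p" and n: "1 \<le> n" and B: "1 \<le> B" and N1: "1 \<le> N" and Np: "N \<le> real p ^ 4"
  shows "2 * sqrt (664 * B^2 * ln (3 * N) / real n) + 2 * (2 * B * ln (3 * N * real n))^2 * ln (3 * N) / real n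
     + 2 * N * (8 * B^2 * exp (- sqrt ((2 * B * ln (3 * N * real n))^2) / (2 * B)) * (2 * exp 3))
     \<le> 5000 * varpi1 n p B"
proof -
  define Lp where "Lp = ln (real p)"
  define Q where "Q = ln (real n * real p)"
  define L where "L = ln (3 * N)"
  define T where "T = ln (3 * N * real n)"
  have n0: "0 < real n" using n by simp
  have p2: "2 \<le> real p" using p by simp
  have Lp: "1/2 \<le> Lp"
  proof -
    have "ln 2 \<le> ln (real p)" using p2 by (subst ln_le_cancel_iff) auto
    thus ?thesis unfolding Lp_def using ln2_half by linarith
  qed
  have QLp: "Lp \<le> Q" unfolding Lp_def Q_def using n p2 by (subst ln_le_cancel_iff) (auto simp: mult_le_cancel_right1)
  have L0: "0 \<le> L" unfolding L_def using N1 by simp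
  have T0: "0 < T"
  proof -
    have "1 * 1 \<le> N * real n" using N1 n by (intro mult_mono) auto
    hence "1 < 3 * N * real n" by simp
    thus ?thesis unfolding T_def by simp
  qed
  have LL: "L \<le> 6 * Lp"
  proof -
    have "(2::real)^2 \<le> real p ^ 2" using p2 by (intro power_mono) auto
    hence "3 \<le> real p ^ 2" by simp
    hence "3 * N \<le> real p ^ 2 * real p ^ 4" using Np N1 by (intro mult_mono) auto
    also have "\<dots> = real p ^ 6" by (simp flip: power_add)
    finally have "ln (3 * N) \<le> ln (real p ^ 6)" using N1 p by (subst ln_le_cancel_iff) auto
    thus ?thesis unfolding L_def Lp_def using p2 by (simp add: ln_realpow)
  qed
  have TT: "T \<le> 6 * Q"
  proof -
    have "(2::real)^2 \<le> real p ^ 2" using p2 by (intro power_mono) auto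
    hence "3 \<le> real p ^ 2" by simp
    hence "3 * N \<le> real p ^ 2 * real p ^ 4" using Np N1 by (intro mult_mono) auto
    also have "\<dots> = real p ^ 6" by (simp flip: power_add)
    finally have a: "3 * N \<le> real p ^ 6" .
    have "real n \<le> real n ^ 6" using n by (simp add: self_le_power)
    hence "3 * N * real n \<le> real p ^ 6 * real n ^ 6" using a N1 n by (intro mult_mono) auto
    also have "\<dots> = (real n * real p) ^ 6" by (simp add: power_mult_distrib)
    finally have "ln (3 * N * real n) \<le> ln ((real n * real p) ^ 6)" using N1 n p by (subst ln_le_cancel_iff) auto
    thus ?thesis unfolding T_def Q_def using p2 n by (simp add: ln_realpow)
  qed
  have t1: "2 * sqrt (664 * B^2 * L / real n) \<le> 128 * (sqrt (Lp / real n) * B)"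
  proof -
    have "664 * B^2 * L / real n \<le> (64 * B)^2 * (Lp / real n)"
    proof -
      have "664 * B^2 * L \<le> 664 * B^2 * (6 * Lp)" using LL by (intro mult_left_mono) auto
      also have "\<dots> \<le> (64 * B)^2 * Lp"
      proof -
        have "0 \<le> B^2 * Lp" using Lp by simp
        thus ?thesis by (simp add: power_mult_distrib mult.commute)
      qed
      finally show ?thesis using n0 by (simp add: divide_right_mono)
    qed
    hence "sqrt (664 * B^2 * L / real n) \<le> sqrt ((64 * B)^2 * (Lp / real n))" by (rule real_sqrt_le_mono)
    also have "\<dots> = sqrt ((64 * B)^2) * sqrt (Lp / real n)" by (rule real_sqrt_mult)
    also have "sqrt ((64 * B)^2) = 64 * B" using B by (intro real_sqrt_unique) auto
    finally show ?thesis by simp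
  qed
  have t2: "2 * (2 * B * T)^2 * L / real n \<le> 1728 * (Lp * Q^2 / real n * B^2)"
  proof -
    have "T^2 \<le> (6 * Q)^2" using T0 TT by (intro power_mono) auto
    hence a: "B^2 * T^2 \<le> B^2 * (6 * Q)^2" by (intro mult_left_mono) auto
    have "(2 * B * T)^2 = 4 * (B^2 * T^2)" by (simp add: power_mult_distrib)
    also have "\<dots> \<le> 4 * (B^2 * (6 * Q)^2)" using a by simp
    finally have b: "(2 * B * T)^2 \<le> 4 * (B^2 * (6 * Q)^2)" .
    have "2 * (2 * B * T)^2 * L \<le> 2 * (4 * (B^2 * (6 * Q)^2)) * (6 * Lp)"
      using L0 LL b by (intro mult_mono) auto
    also have "\<dots> = 1728 * (Lp * Q^2 * B^2)" by (simp add: power2_eq_square algebra_simps)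
    finally show ?thesis using n0 by (simp add: divide_right_mono)
  qed
  have t3: "2 * N * (8 * B^2 * exp (- sqrt ((2 * B * T)^2) / (2 * B)) * (2 * exp 3)) \<le> 2304 * (Lp * Q^2 / real n * B^2)"
  proof -
    have "sqrt ((2 * B * T)^2) = 2 * B * T" using B T0 by simp
    hence "exp (- sqrt ((2 * B * T)^2) / (2 * B)) = exp (- T)" using B by simp
    also have "\<dots> = 1 / (3 * N * real n)" unfolding T_def using N1 n by (simp add: exp_minus inverse_eq_divide)
    finally have e: "exp (- sqrt ((2 * B * T)^2) / (2 * B)) = 1 / (3 * N * real n)" .
    have e3: "exp (3::real) \<le> 27"
    proof -
      have "exp (3::real) = exp 1 ^ 3" by (simp add: exp_of_nat_mult[symmetric])
      also have "\<dots> \<le> 3 ^ 3" using exp_le by (intro power_mono) auto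
      finally show ?thesis by simp
    qed
    have "2 * N * (8 * B^2 * exp (- sqrt ((2 * B * T)^2) / (2 * B)) * (2 * exp 3)) = 32 * exp 3 * B^2 / (3 * real n)"
      unfolding e using N1 n0 by (simp add: field_simps)
    also have "\<dots> \<le> 32 * 27 * B^2 / (3 * real n)" using e3 n0 by (intro divide_right_mono mult_right_mono) auto
    also have "\<dots> = 288 * (B^2 / real n)" by simp
    also have "\<dots> \<le> 288 * (8 * (Lp * Q^2) * (B^2 / real n))"
    proof -
      have "(1/2)^2 \<le> Q^2" using Lp QLp by (intro power_mono) auto
      hence "1/4 \<le> Q^2" by (simp add: power2_eq_square)
      hence "1/2 * (1/4) \<le> Lp * Q^2" using Lp by (intro mult_mono) auto
      hence "1 \<le> 8 * (Lp * Q^2)" by simp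
      hence "1 * (B^2 / real n) \<le> 8 * (Lp * Q^2) * (B^2 / real n)" using n0 by (intro mult_right_mono) auto
      thus ?thesis by simp
    qed
    also have "\<dots> = 2304 * (Lp * Q^2 / real n * B^2)" by simp
    finally show ?thesis .
  qed
  have "varpi1 n p B = sqrt (Lp / real n) * B + Lp * Q^2 / real n * B^2"
    unfolding varpi1_def Lp_def Q_def ..
  moreover have "0 \<le> sqrt (Lp / real n) * B" using Lp B n0 by simp
  moreover have "0 \<le> Lp * Q^2 / real n * B^2" using Lp n0 by simp
  ultimately show ?thesis using t1 t2 t3 unfolding L_def[symmetric] T_def[symmetric] by linarith
qed

lemma main_bound:
  fixes n p :: nat and B :: real and F :: "pt measure" and h :: kern
  assumes p: "p \<ge> 2" and n: "n \<ge> 1" and B: "B \<ge> 1" and P: "prob_space F"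
    and hm: "\<forall>m<p. \<forall>k<p. (\<lambda>z. h (fst z) (snd z) m k) \<in> borel_measurable (F \<Otimes>\<^sub>M F)"
    and mom: "\<forall>m<p. \<forall>k<p.
       (\<forall>l\<in>{0,1,2::nat}. (\<integral>\<^sup>+z. ennreal (\<bar>h (fst z) (snd z) m k\<bar> ^ (2 + l) / B ^ l) \<partial>(F \<Otimes>\<^sub>M F)) \<le> 2)
       \<and> (\<integral>\<^sup>+z. ennreal (exp (\<bar>h (fst z) (snd z) m k\<bar> / B)) \<partial>(F \<Otimes>\<^sub>M F)) \<le> 2"
  shows "(\<integral>\<^sup>+\<omega>. ennreal (Delta1 p F h n \<omega>) \<partial>(PiM {..<n} (\<lambda>_. F))) \<le> ennreal (5000 * varpi1 n p B)"
proof -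
  interpret prob_space F by (rule P)
  interpret PP: pair_prob_space F F by unfold_locales
  define VI where "VI = vech_idx p"
  have VIsub: "VI \<subseteq> {..<p} \<times> {..<p}" unfolding VI_def vech_idx_def by auto
  have finVI: "finite VI" using VIsub by (rule finite_subset) auto
  have VIne: "(0, 0) \<in> VI" unfolding VI_def vech_idx_def using p by auto
  define V where "V = VI \<times> VI"
  have finV: "finite V" unfolding V_def using finVI by auto
  have neV: "V \<noteq> {}" unfolding V_def using VIne by auto
  define N where "N = real (card V)"
  have N1: "1 \<le> N" unfolding N_def using finV neV by (simp add: Suc_le_eq card_gt_0_iff)
  have Np: "N \<le> real p ^ 4"
  proof -
    have "card VI \<le> card ({..<p} \<times> {..<p})" using VIsub by (intro card_mono) auto
    hence c: "card VI \<le> p * p" by (simp add: card_cartesian_product)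
    have "card V = card VI * card VI" unfolding V_def by (simp add: card_cartesian_product)
    also have "\<dots> \<le> (p * p) * (p * p)" using c by (intro mult_mono) auto
    also have "\<dots> = p ^ 4" by (simp add: power4_eq_xxxx)
    finally have "card V \<le> p ^ 4" .
    thus ?thesis unfolding N_def by (metis of_nat_le_iff of_nat_power)
  qed
  define Gf where "Gf a x = gfun F h x a" for a x
  have Gp: "Gf a \<in> borel_measurable F \<and> integrable F (Gf a) \<and> integral\<^sup>L F (Gf a) = 0
      \<and> (\<integral>\<^sup>+x. ennreal (exp (\<bar>Gf a x\<bar> / B)) \<partial>F) \<le> ennreal (2 * exp 3)
      \<and> (\<integral>\<^sup>+x. ennreal ((Gf a x)^4) \<partial>F) \<le> ennreal (664 * B^2)" if a: "a \<in> VI" for a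
  proof -
    obtain j k where ajk: "a = (j, k)" "j < p" "k < p" using a VIsub by auto
    define f where "f z = h (fst z) (snd z) j k" for z
    have fm: "f \<in> borel_measurable (F \<Otimes>\<^sub>M F)" using hm ajk unfolding f_def by auto
    have mo: "(\<forall>l\<in>{0,1,2::nat}. (\<integral>\<^sup>+z. ennreal (\<bar>f z\<bar> ^ (2 + l) / B ^ l) \<partial>(F \<Otimes>\<^sub>M F)) \<le> 2)
       \<and> (\<integral>\<^sup>+z. ennreal (exp (\<bar>f z\<bar> / B)) \<partial>(F \<Otimes>\<^sub>M F)) \<le> 2"
      using mom ajk unfolding f_def by auto
    have m2: "(\<integral>\<^sup>+z. ennreal ((f z)^2) \<partial>(F \<Otimes>\<^sub>M F)) \<le> ennreal 2"
    proof -
      have "(\<integral>\<^sup>+z. ennreal (\<bar>f z\<bar> ^ (2 + 0) / B ^ 0) \<partial>(F \<Otimes>\<^sub>M F)) \<le> 2" using mo by blast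
      thus ?thesis by simp
    qed
    have me: "(\<integral>\<^sup>+z. ennreal (exp (\<bar>f z\<bar> / B)) \<partial>(F \<Otimes>\<^sub>M F)) \<le> ennreal 2" using mo by simp
    have m4: "(\<integral>\<^sup>+z. ennreal ((f z)^4) \<partial>(F \<Otimes>\<^sub>M F)) \<le> ennreal (2 * B^2)"
    proof -
      have h4: "(\<integral>\<^sup>+z. ennreal (\<bar>f z\<bar> ^ (2 + 2) / B ^ 2) \<partial>(F \<Otimes>\<^sub>M F)) \<le> 2" using mo by blast
      have "(\<integral>\<^sup>+z. ennreal ((f z)^4) \<partial>(F \<Otimes>\<^sub>M F))
          = (\<integral>\<^sup>+z. ennreal (B^2) * ennreal (\<bar>f z\<bar> ^ (2 + 2) / B ^ 2) \<partial>(F \<Otimes>\<^sub>M F))"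
      proof (intro nn_integral_cong)
        fix z
        have "(f z)^4 = B^2 * (\<bar>f z\<bar> ^ (2 + 2) / B ^ 2)" using B by simp
        thus "ennreal ((f z)^4) = ennreal (B^2) * ennreal (\<bar>f z\<bar> ^ (2 + 2) / B ^ 2)"
          by (simp add: ennreal_mult[symmetric])
      qed
      also have "\<dots> = ennreal (B^2) * (\<integral>\<^sup>+z. ennreal (\<bar>f z\<bar> ^ (2 + 2) / B ^ 2) \<partial>(F \<Otimes>\<^sub>M F))"
        by (intro nn_integral_cmult measurable_compose[OF fm]) auto
      also have "\<dots> \<le> ennreal (B^2) * 2" using h4 by (intro mult_left_mono) auto
      also have "\<dots> = ennreal (2 * B^2)" by (simp add: ennreal_mult mult.commute)
      finally show ?thesis .
    qed
    note G = G_props[OF P fm B m2 m4 me]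
    have Geq: "Gf a = (\<lambda>x. (\<integral>y. f (x, y) \<partial>F) - integral\<^sup>L (F \<Otimes>\<^sub>M F) f)"
      unfolding Gf_def gfun_def f_def ajk by (simp add: fun_eq_iff)
    show ?thesis unfolding Geq using G by auto
  qed
  define Z where "Z v x = Gf (fst v) x * Gf (snd v) x" for v x
  define s2 where "s2 = 664 * B^2"
  define T where "T = ln (3 * N * real n)"
  define M where "M = (2 * B * T)^2"
  define \<epsilon> where "\<epsilon> = 8 * B^2 * exp (- sqrt M / (2 * B)) * (2 * exp 3)"
  have T0: "0 < T"
  proof -
    have "1 * 1 \<le> N * real n" using N1 n by (intro mult_mono) auto
    hence "1 < 3 * N * real n" by simp
    thus ?thesis unfolding T_def by simp
  qed
  have M0: "0 < M" unfolding M_def using T0 B by simp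
  have s20: "0 < s2" unfolding s2_def using B by simp
  have eps0: "0 \<le> \<epsilon>" unfolding \<epsilon>_def by simp
  have vV: "fst v \<in> VI" "snd v \<in> VI" if "v \<in> V" for v using that unfolding V_def by auto
  have Zm: "Z v \<in> borel_measurable F" if "v \<in> V" for v
    unfolding Z_def using Gp[OF vV(1)[OF that]] Gp[OF vV(2)[OF that]] by (intro borel_measurable_times) auto
  have sq: "(\<integral>\<^sup>+x. ennreal ((Z v x)^2) \<partial>F) \<le> ennreal s2" if "v \<in> V" for v
    unfolding Z_def s2_def using Gp[OF vV(1)[OF that]] Gp[OF vV(2)[OF that]] B
    by (intro sq_int) auto
  have tl: "(\<integral>\<^sup>+x. ennreal \<bar>Z v x - clip M (Z v x)\<bar> \<partial>F) \<le> ennreal \<epsilon>" if "v \<in> V" for v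
    unfolding Z_def \<epsilon>_def using Gp[OF vV(1)[OF that]] Gp[OF vV(2)[OF that]] B M0
    by (intro tail_int[OF P]) auto
  note c = conc[OF P finV neV n M0 s20 eps0 Zm sq tl]
  have Gam: "Gamma_g F h a b = integral\<^sup>L F (Z (a, b))" if "a \<in> VI" "b \<in> VI" for a b
    using Gp[OF that(1)] Gp[OF that(2)] unfolding Gamma_g_def Z_def Gf_def by simp
  have D: "Delta1 p F h n \<omega> = Max ((\<lambda>v. \<bar>(1 / real n) * (\<Sum>i<n. Z v (\<omega> i)) - integral\<^sup>L F (Z v)\<bar>) ` V)" for \<omega>
  proof -
    have "{\<bar>(1 / real n) * (\<Sum>i<n. gfun F h (\<omega> i) a * gfun F h (\<omega> i) b) - Gamma_g F h a b\<bar>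
          | a b. a \<in> vech_idx p \<and> b \<in> vech_idx p}
        = (\<lambda>v. \<bar>(1 / real n) * (\<Sum>i<n. Z v (\<omega> i)) - integral\<^sup>L F (Z v)\<bar>) ` V"
    proof (intro set_eqI iffI)
      fix y assume "y \<in> {\<bar>(1 / real n) * (\<Sum>i<n. gfun F h (\<omega> i) a * gfun F h (\<omega> i) b) - Gamma_g F h a b\<bar>
          | a b. a \<in> vech_idx p \<and> b \<in> vech_idx p}"
      then obtain a b where ab: "a \<in> VI" "b \<in> VI"
        and y: "y = \<bar>(1 / real n) * (\<Sum>i<n. gfun F h (\<omega> i) a * gfun F h (\<omega> i) b) - Gamma_g F h a b\<bar>"
        unfolding VI_def by blast
      show "y \<in> (\<lambda>v. \<bar>(1 / real n) * (\<Sum>i<n. Z v (\<omega> i)) - integral\<^sup>L F (Z v)\<bar>) ` V"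
        unfolding y Gam[OF ab] using ab
        by (intro image_eqI[where x="(a, b)"]) (auto simp: V_def Z_def Gf_def)
    next
      fix y assume "y \<in> (\<lambda>v. \<bar>(1 / real n) * (\<Sum>i<n. Z v (\<omega> i)) - integral\<^sup>L F (Z v)\<bar>) ` V"
      then obtain a b where ab: "a \<in> VI" "b \<in> VI"
        and y: "y = \<bar>(1 / real n) * (\<Sum>i<n. Z (a, b) (\<omega> i)) - integral\<^sup>L F (Z (a, b))\<bar>"
        unfolding V_def by auto
      show "y \<in> {\<bar>(1 / real n) * (\<Sum>i<n. gfun F h (\<omega> i) a * gfun F h (\<omega> i) b) - Gamma_g F h a b\<bar>
          | a b. a \<in> vech_idx p \<and> b \<in> vech_idx p}"
      proof -
        have "y = \<bar>(1 / real n) * (\<Sum>i<n. gfun F h (\<omega> i) a * gfun F h (\<omega> i) b) - Gamma_g F h a b\<bar>"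
          unfolding y Gam[OF ab] by (simp add: Z_def Gf_def)
        thus ?thesis using ab unfolding VI_def by blast
      qed
    qed
    thus ?thesis unfolding Delta1_def by simp
  qed
  have "(\<integral>\<^sup>+\<omega>. ennreal (Delta1 p F h n \<omega>) \<partial>(PiM {..<n} (\<lambda>_. F)))
      = (\<integral>\<^sup>+\<omega>. ennreal (Max ((\<lambda>v. \<bar>(1 / real n) * (\<Sum>i<n. Z v (\<omega> i)) - integral\<^sup>L F (Z v)\<bar>) ` V)) \<partial>(PiM {..<n} (\<lambda>_. F)))"
    unfolding D ..
  also have "\<dots> \<le> ennreal (2 * sqrt (s2 * ln (3 * real (card V)) / real n) + 2 * M * ln (3 * real (card V)) / real n
                 + 2 * real (card V) * \<epsilon>)" by (rule c)
  also have "\<dots> \<le> ennreal (5000 * varpi1 n p B)"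
  proof (intro ennreal_leI)
    have "2 * sqrt (s2 * ln (3 * real (card V)) / real n) + 2 * M * ln (3 * real (card V)) / real n
                 + 2 * real (card V) * \<epsilon>
        = 2 * sqrt (664 * B^2 * ln (3 * N) / real n) + 2 * (2 * B * ln (3 * N * real n))^2 * ln (3 * N) / real n
     + 2 * N * (8 * B^2 * exp (- sqrt ((2 * B * ln (3 * N * real n))^2) / (2 * B)) * (2 * exp 3))"
      unfolding s2_def M_def \<epsilon>_def T_def N_def by simp
    also have "\<dots> \<le> 5000 * varpi1 n p B" by (rule numeric[OF p n B N1 Np])
    finally show "2 * sqrt (s2 * ln (3 * real (card V)) / real n) + 2 * M * ln (3 * real (card V)) / real n
                 + 2 * real (card V) * \<epsilon> \<le> 5000 * varpi1 n p B" .
  qed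
  finally show ?thesis .
qed

theorem lemmaC3:
  shows "\<exists>K>0. \<forall>(n::nat) (p::nat) (B::real) (F::pt measure) (h::kern).
    p \<ge> 2 \<longrightarrow> n \<ge> 1 \<longrightarrow> B \<ge> 1 \<longrightarrow>
    prob_space F \<longrightarrow> sets F = sets (PiM {..<p} (\<lambda>_. borel)) \<longrightarrow>
    (\<forall>m<p. \<forall>k<p. (\<lambda>z. h (fst z) (snd z) m k) \<in> borel_measurable (F \<Otimes>\<^sub>M F)) \<longrightarrow>
    (\<forall>x\<in>space F. \<forall>y\<in>space F. h x y = h y x) \<longrightarrow>
    (\<forall>x\<in>space F. \<forall>y\<in>space F. \<forall>m k. h x y m k = h x y k m) \<longrightarrow>
    (\<forall>m<p. \<forall>k<p.
       (\<forall>l\<in>{0,1,2::nat}. (\<integral>\<^sup>+z. ennreal (\<bar>h (fst z) (snd z) m k\<bar> ^ (2 + l) / B ^ l) \<partial>(F \<Otimes>\<^sub>M F)) \<le> 2)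
       \<and> (\<integral>\<^sup>+z. ennreal (exp (\<bar>h (fst z) (snd z) m k\<bar> / B)) \<partial>(F \<Otimes>\<^sub>M F)) \<le> 2) \<longrightarrow>
    (\<integral>\<^sup>+\<omega>. ennreal (Delta1 p F h n \<omega>) \<partial>(PiM {..<n} (\<lambda>_. F)))
      \<le> ennreal (K * varpi1 n p B)"
  by (intro exI[of _ 5000] conjI allI impI main_bound) auto

end
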